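(* Let $R$ be a commutative local ring and $s\in R$. Then $A\in M_2(R;s)$ is strongly $J$-clean if and only if one of the following holds: (1) $A\in J\big(M_2(R;s)\big)$; (2) $I_2-A\in J\big(M_2(R;s)\big)$; (3) the $s$-characteristic polynomial $t^2-tr(A)t+\det_s(A)$ has a root in $J(R)$ and a root in $1+J(R)$.
   Context: A commutative ring $R$ is local if it has a unique maximal ideal $J(R)$ (its Jacobson radical); $J(T)$ denotes the Jacobson radical of a ring $T$. For a commutative ring $R$ and $s\in R$, $M_2(R;s)$ denotes the ring whose elements are the $2\times 2$ arrays $\left[\begin{smallmatrix} a&b\\ c&d\end{smallmatrix}\right]$ with $a,b,c,d\in R$, with componentwise addition and multiplication $\left[\begin{smallmatrix} a&b\\ c&d\end{smallmatrix}\right]\left[\begin{smallmatrix} a'&b'\\ c'&d'\end{smallmatrix}\right]=\left[\begin{smallmatrix} aa'+s^2bc'&ab'+bd'\\ ca'+dc'&s^2cb'+dd'\end{smallmatrix}\right]$, with identity $I_2$. For $A=\left[\begin{smallmatrix} a&b\\ c&d\end{smallmatrix}\right]$, $\det_s(A)=ad-s^2bc$ and $tr(A)=a+d$. An element $a$ of a ring $T$ is strongly $J$-clean if there is an idempotent $e\in T$ with $ae=ea$ and $a-e\in J(T)$. *)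

theory Defs
  imports "HOL-Algebra.Algebra"
begin

definition left_ideal :: "'a set \<Rightarrow> ('a, 'b) ring_scheme \<Rightarrow> bool" where
  "left_ideal I T \<longleftrightarrow> additive_subgroup I T \<and>
     (\<forall>x\<in>carrier T. \<forall>a\<in>I. x \<otimes>\<^bsub>T\<^esub> a \<in> I)"

definition maximal_left_ideal :: "'a set \<Rightarrow> ('a, 'b) ring_scheme \<Rightarrow> bool" where
  "maximal_left_ideal I T \<longleftrightarrow> left_ideal I T \<and> I \<noteq> carrier T \<and>
     (\<forall>K. left_ideal K T \<and> I \<subseteq> K \<longrightarrow> K = I \<or> K = carrier T)"

definition jacobson :: "('a, 'b) ring_scheme \<Rightarrow> 'a set" where
  "jacobson T = carrier T \<inter> \<Inter> {I. maximal_left_ideal I T}"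

definition local_ring :: "('a, 'b) ring_scheme \<Rightarrow> bool" where
  "local_ring R \<longleftrightarrow> cring R \<and> (\<exists>!I. maximalideal I R)"

definition strongly_J_clean :: "('a, 'b) ring_scheme \<Rightarrow> 'a \<Rightarrow> bool" where
  "strongly_J_clean T a \<longleftrightarrow> a \<in> carrier T \<and>
     (\<exists>e\<in>carrier T. e \<otimes>\<^bsub>T\<^esub> e = e \<and> a \<otimes>\<^bsub>T\<^esub> e = e \<otimes>\<^bsub>T\<^esub> a \<and>
        a \<ominus>\<^bsub>T\<^esub> e \<in> jacobson T)"

text \<open>The ring M_2(R;s); an array [a b; c d] is the tuple (a,b,c,d).\<close>
definition M2s :: "('a, 'b) ring_scheme \<Rightarrow> 'a \<Rightarrow> ('a \<times> 'a \<times> 'a \<times> 'a) ring" where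
  "M2s R s = \<lparr>carrier = {(a,b,c,d). a \<in> carrier R \<and> b \<in> carrier R \<and> c \<in> carrier R \<and> d \<in> carrier R},
     monoid.mult = (\<lambda>(a,b,c,d) (a',b',c',d').
        (a \<otimes>\<^bsub>R\<^esub> a' \<oplus>\<^bsub>R\<^esub> (s \<otimes>\<^bsub>R\<^esub> s) \<otimes>\<^bsub>R\<^esub> b \<otimes>\<^bsub>R\<^esub> c',
         a \<otimes>\<^bsub>R\<^esub> b' \<oplus>\<^bsub>R\<^esub> b \<otimes>\<^bsub>R\<^esub> d',
         c \<otimes>\<^bsub>R\<^esub> a' \<oplus>\<^bsub>R\<^esub> d \<otimes>\<^bsub>R\<^esub> c',
         (s \<otimes>\<^bsub>R\<^esub> s) \<otimes>\<^bsub>R\<^esub> c \<otimes>\<^bsub>R\<^esub> b' \<oplus>\<^bsub>R\<^esub> d \<otimes>\<^bsub>R\<^esub> d')),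
     one = (\<one>\<^bsub>R\<^esub>, \<zero>\<^bsub>R\<^esub>, \<zero>\<^bsub>R\<^esub>, \<one>\<^bsub>R\<^esub>),
     ring.zero = (\<zero>\<^bsub>R\<^esub>, \<zero>\<^bsub>R\<^esub>, \<zero>\<^bsub>R\<^esub>, \<zero>\<^bsub>R\<^esub>),
     ring.add = (\<lambda>(a,b,c,d) (a',b',c',d').
        (a \<oplus>\<^bsub>R\<^esub> a', b \<oplus>\<^bsub>R\<^esub> b', c \<oplus>\<^bsub>R\<^esub> c', d \<oplus>\<^bsub>R\<^esub> d'))\<rparr>"

definition det_s :: "('a, 'b) ring_scheme \<Rightarrow> 'a \<Rightarrow> 'a \<times> 'a \<times> 'a \<times> 'a \<Rightarrow> 'a" where
  "det_s R s A = (case A of (a,b,c,d) \<Rightarrow>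
      a \<otimes>\<^bsub>R\<^esub> d \<ominus>\<^bsub>R\<^esub> (s \<otimes>\<^bsub>R\<^esub> s) \<otimes>\<^bsub>R\<^esub> b \<otimes>\<^bsub>R\<^esub> c)"

definition tr2 :: "('a, 'b) ring_scheme \<Rightarrow> 'a \<times> 'a \<times> 'a \<times> 'a \<Rightarrow> 'a" where
  "tr2 R A = (case A of (a,b,c,d) \<Rightarrow> a \<oplus>\<^bsub>R\<^esub> d)"

definition char_s :: "('a, 'b) ring_scheme \<Rightarrow> 'a \<Rightarrow> 'a \<times> 'a \<times> 'a \<times> 'a \<Rightarrow> 'a \<Rightarrow> 'a" where
  "char_s R s A t = t \<otimes>\<^bsub>R\<^esub> t \<ominus>\<^bsub>R\<^esub> tr2 R A \<otimes>\<^bsub>R\<^esub> t \<oplus>\<^bsub>R\<^esub> det_s R s A"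

end

theory Submission
  imports Defs
begin


context ring
begin

lemma left_idealI:
  assumes "K \<subseteq> carrier R" "\<zero> \<in> K" "\<And>x y. x \<in> K \<Longrightarrow> y \<in> K \<Longrightarrow> x \<oplus> y \<in> K"
    "\<And>x a. x \<in> carrier R \<Longrightarrow> a \<in> K \<Longrightarrow> x \<otimes> a \<in> K"
  shows "left_ideal K R"
proof -
  have neg: "\<ominus> a \<in> K" if "a \<in> K" for a
  proof -
    have "a \<in> carrier R" using that assms(1) by auto
    then have "\<ominus> a = (\<ominus> \<one>) \<otimes> a" by (simp add: l_minus)
    also have "\<dots> \<in> K" using assms(4) that by simp
    finally show ?thesis .
  qed
  have "subgroup K (add_monoid R)"
    by (rule subgroup.intro) (use assms neg in \<open>auto simp: a_inv_def[symmetric]\<close>)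
  then show ?thesis unfolding left_ideal_def using assms(4) by (auto intro: additive_subgroupI)
qed

lemma left_idealD:
  assumes "left_ideal K R"
  shows "K \<subseteq> carrier R" "\<zero> \<in> K" "\<And>x y. x \<in> K \<Longrightarrow> y \<in> K \<Longrightarrow> x \<oplus> y \<in> K"
    "\<And>x. x \<in> K \<Longrightarrow> \<ominus> x \<in> K" "\<And>x a. x \<in> carrier R \<Longrightarrow> a \<in> K \<Longrightarrow> x \<otimes> a \<in> K"
proof -
  have A: "additive_subgroup K R" and L: "\<forall>x\<in>carrier R. \<forall>a\<in>K. x \<otimes> a \<in> K"
    using assms unfolding left_ideal_def by auto
  show "K \<subseteq> carrier R" by (rule additive_subgroup.a_subset[OF A])
  show "\<zero> \<in> K" by (rule additive_subgroup.zero_closed[OF A])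
  show "\<And>x y. x \<in> K \<Longrightarrow> y \<in> K \<Longrightarrow> x \<oplus> y \<in> K" by (rule additive_subgroup.a_closed[OF A])
  show "\<And>x. x \<in> K \<Longrightarrow> \<ominus> x \<in> K" by (rule additive_subgroup.a_inv_closed[OF A])
  show "\<And>x a. x \<in> carrier R \<Longrightarrow> a \<in> K \<Longrightarrow> x \<otimes> a \<in> K" using L by blast
qed

lemma left_ideal_one:
  assumes "left_ideal K R" "\<one> \<in> K" shows "K = carrier R"
proof
  show "K \<subseteq> carrier R" using left_idealD(1)[OF assms(1)] .
  show "carrier R \<subseteq> K"
  proof
    fix x assume "x \<in> carrier R"
    then have "x = x \<otimes> \<one>" by simp
    also have "\<dots> \<in> K" using left_idealD(5)[OF assms(1)] \<open>x \<in> carrier R\<close> assms(2) by blast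
    finally show "x \<in> K" .
  qed
qed

lemma jac_sub: "jacobson R \<subseteq> carrier R"
  unfolding jacobson_def by blast

lemma jac_add: "x \<in> jacobson R \<Longrightarrow> y \<in> jacobson R \<Longrightarrow> x \<oplus> y \<in> jacobson R"
  unfolding jacobson_def maximal_left_ideal_def using left_idealD(3) by auto

lemma jac_neg: "x \<in> jacobson R \<Longrightarrow> \<ominus> x \<in> jacobson R"
  unfolding jacobson_def maximal_left_ideal_def using left_idealD(4) by auto

lemma jac_lmult: "y \<in> carrier R \<Longrightarrow> x \<in> jacobson R \<Longrightarrow> y \<otimes> x \<in> jacobson R"
  unfolding jacobson_def maximal_left_ideal_def using left_idealD(5) by auto

lemma exists_max_left_ideal:
  assumes I: "left_ideal I R" "\<one> \<notin> I"
  shows "\<exists>M. maximal_left_ideal M R \<and> I \<subseteq> M"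
proof -
  let ?S = "{K. left_ideal K R \<and> I \<subseteq> K \<and> \<one> \<notin> K}"
  have "\<forall>C\<in>chains ?S. \<exists>W\<in>?S. \<forall>V\<in>C. V \<subseteq> W"
  proof
    fix C assume C: "C \<in> chains ?S"
    show "\<exists>W\<in>?S. \<forall>V\<in>C. V \<subseteq> W"
    proof (cases "C = {}")
      case True then show ?thesis using I by auto
    next
      case False
      have CS: "C \<subseteq> ?S" using C by (simp add: chains_def)
      have ch: "\<And>V Y. V \<in> C \<Longrightarrow> Y \<in> C \<Longrightarrow> V \<subseteq> Y \<or> Y \<subseteq> V"
        using C chainsD by blast
      obtain X0 where X0: "X0 \<in> C" using False by auto
      have "left_ideal (\<Union>C) R"
      proof (rule left_idealI)
        show "\<Union>C \<subseteq> carrier R" using CS left_idealD(1) by blast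
        show "\<zero> \<in> \<Union>C" using X0 CS left_idealD(2) by blast
      next
        fix x y assume "x \<in> \<Union>C" "y \<in> \<Union>C"
        then obtain V Y where XY: "x \<in> V" "V \<in> C" "y \<in> Y" "Y \<in> C" by auto
        show "x \<oplus> y \<in> \<Union>C"
        proof (cases "V \<subseteq> Y")
          case True
          then have "x \<oplus> y \<in> Y" using XY CS left_idealD(3)[of Y] by blast
          then show ?thesis using XY by blast
        next
          case False
          then have "Y \<subseteq> V" using ch XY by blast
          then have "x \<oplus> y \<in> V" using XY CS left_idealD(3)[of V] by blast
          then show ?thesis using XY by blast
        qed
      next
        fix x a assume "x \<in> carrier R" "a \<in> \<Union>C"
        then obtain V where "a \<in> V" "V \<in> C" by auto
        then have "x \<otimes> a \<in> V" using CS left_idealD(5)[of V] \<open>x \<in> carrier R\<close> by blast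
        then show "x \<otimes> a \<in> \<Union>C" using \<open>V \<in> C\<close> by blast
      qed
      moreover have "I \<subseteq> \<Union>C" using X0 CS by blast
      moreover have "\<one> \<notin> \<Union>C" using CS by blast
      ultimately show ?thesis by blast
    qed
  qed
  then have "\<exists>M\<in>?S. \<forall>V\<in>?S. M \<subseteq> V \<longrightarrow> V = M" by (rule Zorn_Lemma2)
  then obtain M where M: "M \<in> ?S" "\<forall>V\<in>?S. M \<subseteq> V \<longrightarrow> V = M" by (rule bexE)
  have "maximal_left_ideal M R"
    unfolding maximal_left_ideal_def
  proof (intro conjI allI impI)
    show "left_ideal M R" using M by blast
    show "M \<noteq> carrier R" using M by blast
    fix K assume K: "left_ideal K R \<and> M \<subseteq> K"
    show "K = M \<or> K = carrier R"
    proof (cases "\<one> \<in> K")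
      case True then show ?thesis using left_ideal_one K by blast
    next
      case False then show ?thesis using M K by blast
    qed
  qed
  then show ?thesis using M by blast
qed

lemma jac_idem_zero:
  assumes e: "e \<in> carrier R" "e \<otimes> e = e" "e \<in> jacobson R"
  shows "e = \<zero>"
proof (rule ccontr)
  assume ne: "e \<noteq> \<zero>"
  let ?I = "{y \<otimes> (\<one> \<ominus> e) | y. y \<in> carrier R}"
  have li: "left_ideal ?I R"
  proof (rule left_idealI)
    show "?I \<subseteq> carrier R" using e by auto
    have "\<zero> = \<zero> \<otimes> (\<one> \<ominus> e)" using e by simp
    then show "\<zero> \<in> ?I" by blast
  next
    fix x y assume "x \<in> ?I" "y \<in> ?I"
    then obtain a b where ab: "a \<in> carrier R" "b \<in> carrier R" "x = a \<otimes> (\<one> \<ominus> e)" "y = b \<otimes> (\<one> \<ominus> e)" by auto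
    have "x \<oplus> y = (a \<oplus> b) \<otimes> (\<one> \<ominus> e)" using ab e by (simp add: l_distr)
    then show "x \<oplus> y \<in> ?I" using ab by blast
  next
    fix x a assume "x \<in> carrier R" "a \<in> ?I"
    then obtain b where b: "b \<in> carrier R" "a = b \<otimes> (\<one> \<ominus> e)" by auto
    have "x \<otimes> a = (x \<otimes> b) \<otimes> (\<one> \<ominus> e)" using b e \<open>x \<in> carrier R\<close> by (simp add: m_assoc)
    then show "x \<otimes> a \<in> ?I" using b \<open>x \<in> carrier R\<close> by blast
  qed
  have "\<one> \<notin> ?I"
  proof
    assume "\<one> \<in> ?I"
    then obtain y where y: "y \<in> carrier R" "\<one> = y \<otimes> (\<one> \<ominus> e)" by auto
    have "e = (y \<otimes> (\<one> \<ominus> e)) \<otimes> e" by (metis l_one y(2) e(1))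
    also have "\<dots> = y \<otimes> (e \<ominus> e \<otimes> e)" using y(1) e(1) by algebra
    also have "\<dots> = \<zero>" using y(1) e(1,2) by (simp add: r_neg minus_eq)
    finally show False using ne by simp
  qed
  then obtain M where M: "maximal_left_ideal M R" "?I \<subseteq> M"
    using exists_max_left_ideal li by blast
  have "e \<in> M" using e(3) M(1) unfolding jacobson_def by blast
  moreover have "\<one> \<ominus> e \<in> M"
  proof -
    have "\<one> \<ominus> e = \<one> \<otimes> (\<one> \<ominus> e)" using e by simp
    then have "\<one> \<ominus> e \<in> ?I" by blast
    then show ?thesis using M by blast
  qed
  ultimately have "e \<oplus> (\<one> \<ominus> e) \<in> M" using M(1) left_idealD(3) unfolding maximal_left_ideal_def by blast
  moreover have "e \<oplus> (\<one> \<ominus> e) = \<one>" using e by algebra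
  ultimately have "\<one> \<in> M" by simp
  then show False using M(1) left_ideal_one unfolding maximal_left_ideal_def by blast
qed

lemma jacI:
  assumes x: "x \<in> carrier R"
    and inv: "\<And>y. y \<in> carrier R \<Longrightarrow> \<exists>u\<in>carrier R. u \<otimes> (\<one> \<ominus> y \<otimes> x) = \<one>"
  shows "x \<in> jacobson R"
  unfolding jacobson_def
proof (intro IntI InterI)
  show "x \<in> carrier R" by fact
  fix M assume "M \<in> {I. maximal_left_ideal I R}"
  then have M: "left_ideal M R" "M \<noteq> carrier R"
    "\<And>K. left_ideal K R \<Longrightarrow> M \<subseteq> K \<Longrightarrow> K = M \<or> K = carrier R"
    unfolding maximal_left_ideal_def by auto
  show "x \<in> M"
  proof (rule ccontr)
    assume xM: "x \<notin> M"
    let ?K = "{m \<oplus> y \<otimes> x | m y. m \<in> M \<and> y \<in> carrier R}"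
    have MC: "M \<subseteq> carrier R" using left_idealD(1)[OF M(1)] .
    have li: "left_ideal ?K R"
    proof (rule left_idealI)
      show "?K \<subseteq> carrier R" using MC x by auto
      have "\<zero> = \<zero> \<oplus> \<zero> \<otimes> x" using x by simp
      then show "\<zero> \<in> ?K" using left_idealD(2)[OF M(1)] by blast
    next
      fix a b assume "a \<in> ?K" "b \<in> ?K"
      then obtain m1 y1 m2 y2 where ab: "m1 \<in> M" "y1 \<in> carrier R" "a = m1 \<oplus> y1 \<otimes> x"
          "m2 \<in> M" "y2 \<in> carrier R" "b = m2 \<oplus> y2 \<otimes> x" by blast
      have c: "m1 \<in> carrier R" "m2 \<in> carrier R" using ab MC by auto
      have "a \<oplus> b = (m1 \<oplus> m2) \<oplus> (y1 \<oplus> y2) \<otimes> x" using ab c x by algebra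
      moreover have "m1 \<oplus> m2 \<in> M" using left_idealD(3)[OF M(1)] ab by blast
      ultimately show "a \<oplus> b \<in> ?K" using ab by blast
    next
      fix z a assume z: "z \<in> carrier R" and "a \<in> ?K"
      then obtain m y where a: "m \<in> M" "y \<in> carrier R" "a = m \<oplus> y \<otimes> x" by blast
      have c: "m \<in> carrier R" using a MC by auto
      have "z \<otimes> a = z \<otimes> m \<oplus> (z \<otimes> y) \<otimes> x" using a c x z by algebra
      moreover have "z \<otimes> m \<in> M" using left_idealD(5)[OF M(1)] a z by blast
      ultimately show "z \<otimes> a \<in> ?K" using a z by blast
    qed
    have "M \<subseteq> ?K"
    proof
      fix m assume "m \<in> M"
      then have "m = m \<oplus> \<zero> \<otimes> x" using MC x by auto
      then show "m \<in> ?K" using \<open>m \<in> M\<close> by blast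
    qed
    moreover have "x \<in> ?K"
    proof -
      have "x = \<zero> \<oplus> \<one> \<otimes> x" using x by simp
      then show ?thesis using left_idealD(2)[OF M(1)] by blast
    qed
    ultimately have "?K = carrier R" using M(3)[OF li] xM by blast
    then have "\<one> \<in> ?K" by simp
    then obtain m y where my: "m \<in> M" "y \<in> carrier R" "\<one> = m \<oplus> y \<otimes> x" by blast
    have mc: "m \<in> carrier R" using my MC by auto
    have "m = \<one> \<ominus> y \<otimes> x" using my mc x by algebra
    obtain u where u: "u \<in> carrier R" "u \<otimes> (\<one> \<ominus> y \<otimes> x) = \<one>" using inv my(2) by blast
    have "u \<otimes> m \<in> M" using left_idealD(5)[OF M(1)] u my by blast
    then have "\<one> \<in> M" using u \<open>m = \<one> \<ominus> y \<otimes> x\<close> by simp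
    then show False using left_ideal_one[OF M(1)] M(2) by blast
  qed
qed

end



lemma M2s_carrier: "(a,b,c,d) \<in> carrier (M2s R s) \<longleftrightarrow>
   a \<in> carrier R \<and> b \<in> carrier R \<and> c \<in> carrier R \<and> d \<in> carrier R"
  by (simp add: M2s_def)

lemma M2s_mult: "(a,b,c,d) \<otimes>\<^bsub>M2s R s\<^esub> (a',b',c',d') =
        (a \<otimes>\<^bsub>R\<^esub> a' \<oplus>\<^bsub>R\<^esub> (s \<otimes>\<^bsub>R\<^esub> s) \<otimes>\<^bsub>R\<^esub> b \<otimes>\<^bsub>R\<^esub> c',
         a \<otimes>\<^bsub>R\<^esub> b' \<oplus>\<^bsub>R\<^esub> b \<otimes>\<^bsub>R\<^esub> d',
         c \<otimes>\<^bsub>R\<^esub> a' \<oplus>\<^bsub>R\<^esub> d \<otimes>\<^bsub>R\<^esub> c',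
         (s \<otimes>\<^bsub>R\<^esub> s) \<otimes>\<^bsub>R\<^esub> c \<otimes>\<^bsub>R\<^esub> b' \<oplus>\<^bsub>R\<^esub> d \<otimes>\<^bsub>R\<^esub> d')"
  by (simp add: M2s_def)

lemma M2s_add: "(a,b,c,d) \<oplus>\<^bsub>M2s R s\<^esub> (a',b',c',d') =
        (a \<oplus>\<^bsub>R\<^esub> a', b \<oplus>\<^bsub>R\<^esub> b', c \<oplus>\<^bsub>R\<^esub> c', d \<oplus>\<^bsub>R\<^esub> d')"
  by (simp add: M2s_def)

lemma M2s_one: "\<one>\<^bsub>M2s R s\<^esub> = (\<one>\<^bsub>R\<^esub>, \<zero>\<^bsub>R\<^esub>, \<zero>\<^bsub>R\<^esub>, \<one>\<^bsub>R\<^esub>)"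
  by (simp add: M2s_def)

lemma M2s_zero: "\<zero>\<^bsub>M2s R s\<^esub> = (\<zero>\<^bsub>R\<^esub>, \<zero>\<^bsub>R\<^esub>, \<zero>\<^bsub>R\<^esub>, \<zero>\<^bsub>R\<^esub>)"
  by (simp add: M2s_def)

lemmas M2s_simps = M2s_carrier M2s_mult M2s_add M2s_one M2s_zero

context cring
begin

lemma cert1: "\<lbrakk>x \<in> carrier R; y \<in> carrier R; k \<in> carrier R; h \<in> carrier R; h = \<zero>; x = y \<oplus> k \<otimes> h\<rbrakk> \<Longrightarrow> x = y"
  by simp

lemma cert2: "\<lbrakk>x \<in> carrier R; y \<in> carrier R; k \<in> carrier R; h \<in> carrier R; k2 \<in> carrier R; h2 \<in> carrier R;
   h = \<zero>; h2 = \<zero>; x = y \<oplus> k \<otimes> h \<oplus> k2 \<otimes> h2\<rbrakk> \<Longrightarrow> x = y"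
  by simp

lemma cert3: "\<lbrakk>x \<in> carrier R; y \<in> carrier R; k \<in> carrier R; h \<in> carrier R; k2 \<in> carrier R; h2 \<in> carrier R;
   k3 \<in> carrier R; h3 \<in> carrier R;
   h = \<zero>; h2 = \<zero>; h3 = \<zero>; x = y \<oplus> k \<otimes> h \<oplus> k2 \<otimes> h2 \<oplus> k3 \<otimes> h3\<rbrakk> \<Longrightarrow> x = y"
  by simp

lemma unit_cancel: "\<lbrakk>u \<in> Units R; x \<in> carrier R; u \<otimes> x = \<zero>\<rbrakk> \<Longrightarrow> x = \<zero>"
  by (metis Units_closed Units_inv_closed Units_l_inv l_one m_assoc r_null)

lemma left_ideal_iff: "left_ideal K R \<longleftrightarrow> ideal K R"
proof
  assume L: "left_ideal K R"
  have sub: "K \<subseteq> carrier R" using left_idealD(1)[OF L] .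
  show "ideal K R"
  proof (intro ideal.intro ideal_axioms.intro)
    show "additive_subgroup K R" using L unfolding left_ideal_def by blast
    show "ring R" by (rule ring_axioms)
    show "\<And>a x. a \<in> K \<Longrightarrow> x \<in> carrier R \<Longrightarrow> x \<otimes> a \<in> K" using left_idealD(5)[OF L] by blast
    show "\<And>a x. a \<in> K \<Longrightarrow> x \<in> carrier R \<Longrightarrow> a \<otimes> x \<in> K"
      using left_idealD(5)[OF L] sub m_comm by (metis subsetD)
  qed
next
  assume I: "ideal K R"
  show "left_ideal K R" unfolding left_ideal_def
    using ideal.axioms(1)[OF I] ideal.I_l_closed[OF I] by blast
qed

end

locale lr = cring R for R (structure) +
  assumes loc: "local_ring R"
begin

definition P where "P = (THE I. maximalideal I R)"

lemma P_max: "maximalideal P R"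
  using loc unfolding local_ring_def P_def by (metis theI')

lemma P_unique: "maximalideal I R \<Longrightarrow> I = P"
  using loc P_max unfolding local_ring_def by blast

lemma P_ideal: "ideal P R"
  using P_max unfolding maximalideal_def by blast

lemma P_sub: "P \<subseteq> carrier R"
  by (rule additive_subgroup.a_subset[OF ideal.axioms(1)[OF P_ideal]])

lemma P_carr: "x \<in> P \<Longrightarrow> x \<in> carrier R"
  using P_sub by blast

lemma P_add: "x \<in> P \<Longrightarrow> y \<in> P \<Longrightarrow> x \<oplus> y \<in> P"
  by (rule additive_subgroup.a_closed[OF ideal.axioms(1)[OF P_ideal]])

lemma P_neg: "x \<in> P \<Longrightarrow> \<ominus> x \<in> P"
  by (rule additive_subgroup.a_inv_closed[OF ideal.axioms(1)[OF P_ideal]])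

lemma P_zero: "\<zero> \<in> P"
  by (rule additive_subgroup.zero_closed[OF ideal.axioms(1)[OF P_ideal]])

lemma P_lmult: "y \<in> carrier R \<Longrightarrow> x \<in> P \<Longrightarrow> y \<otimes> x \<in> P"
  by (rule ideal.I_l_closed[OF P_ideal])

lemma P_rmult: "y \<in> carrier R \<Longrightarrow> x \<in> P \<Longrightarrow> x \<otimes> y \<in> P"
  by (rule ideal.I_r_closed[OF P_ideal])

lemma P_minus: "x \<in> P \<Longrightarrow> y \<in> P \<Longrightarrow> x \<ominus> y \<in> P"
  by (simp add: minus_eq P_add P_neg)

lemma one_notin_P: "\<one> \<notin> P"
  using ideal.one_imp_carrier[OF P_ideal] maximalideal.I_notcarr[OF P_max] by blast

lemma max_iff: "maximal_left_ideal K R \<longleftrightarrow> maximalideal K R"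
proof
  assume M: "maximal_left_ideal K R"
  then have I: "ideal K R" using left_ideal_iff unfolding maximal_left_ideal_def by blast
  show "maximalideal K R"
  proof (rule maximalidealI[OF I])
    show "carrier R \<noteq> K" using M unfolding maximal_left_ideal_def by blast
    fix J assume "ideal J R" "K \<subseteq> J" "J \<subseteq> carrier R"
    then show "J = K \<or> J = carrier R" using M left_ideal_iff unfolding maximal_left_ideal_def by blast
  qed
next
  assume M: "maximalideal K R"
  have I: "ideal K R" using M unfolding maximalideal_def by blast
  show "maximal_left_ideal K R" unfolding maximal_left_ideal_def
  proof (intro conjI allI impI)
    show "left_ideal K R" using I left_ideal_iff by blast
    show "K \<noteq> carrier R" using maximalideal.I_notcarr[OF M] by blast
    fix J assume J: "left_ideal J R \<and> K \<subseteq> J"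
    have "ideal J R" using J left_ideal_iff by blast
    moreover have "J \<subseteq> carrier R" using left_idealD(1) J by blast
    ultimately show "J = K \<or> J = carrier R"
      using maximalideal.I_maximal[OF M] J by blast
  qed
qed

lemma jac_R: "jacobson R = P"
proof -
  have e: "maximal_left_ideal K R \<longleftrightarrow> K = P" for K using max_iff[of K] P_max P_unique[of K] by blast
  have "{K. maximal_left_ideal K R} = {P}" using e by blast
  then show ?thesis unfolding jacobson_def using P_sub by auto
qed

lemma nonP_unit:
  assumes x: "x \<in> carrier R" "x \<notin> P" shows "x \<in> Units R"
proof (rule ccontr)
  assume nu: "x \<notin> Units R"
  let ?I = "{y \<otimes> x | y. y \<in> carrier R}"
  have li: "left_ideal ?I R"
  proof (rule left_idealI)
    show "?I \<subseteq> carrier R" using x by auto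
    have "\<zero> = \<zero> \<otimes> x" using x by simp
    then show "\<zero> \<in> ?I" by blast
  next
    fix a b assume "a \<in> ?I" "b \<in> ?I"
    then obtain y1 y2 where y: "y1 \<in> carrier R" "y2 \<in> carrier R" "a = y1 \<otimes> x" "b = y2 \<otimes> x" by auto
    then have "a \<oplus> b = (y1 \<oplus> y2) \<otimes> x" using x by (simp add: l_distr)
    then show "a \<oplus> b \<in> ?I" using y by blast
  next
    fix z a assume "z \<in> carrier R" "a \<in> ?I"
    then obtain y where y: "y \<in> carrier R" "a = y \<otimes> x" by auto
    then have "z \<otimes> a = (z \<otimes> y) \<otimes> x" using x \<open>z \<in> carrier R\<close> by (simp add: m_assoc)
    then show "z \<otimes> a \<in> ?I" using y \<open>z \<in> carrier R\<close> by blast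
  qed
  have "\<one> \<notin> ?I"
  proof
    assume "\<one> \<in> ?I"
    then obtain y where y: "y \<in> carrier R" "\<one> = y \<otimes> x" by auto
    then have "x \<in> Units R" unfolding Units_def using x m_comm by auto
    then show False using nu by simp
  qed
  then obtain M where M: "maximal_left_ideal M R" "?I \<subseteq> M"
    using exists_max_left_ideal li by blast
  have "M = P" using M(1) max_iff P_unique by blast
  moreover have "x \<in> ?I"
  proof -
    have "x = \<one> \<otimes> x" using x by simp
    then show ?thesis by blast
  qed
  ultimately show False using M(2) x(2) by blast
qed

lemma unit_nonP: "x \<in> Units R \<Longrightarrow> x \<notin> P"
proof
  assume "x \<in> Units R" "x \<in> P"
  then have "inv x \<otimes> x \<in> P" using P_lmult by blast
  then show False using \<open>x \<in> Units R\<close> one_notin_P by simp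
qed

lemma one_minus_P_unit: "p \<in> P \<Longrightarrow> \<one> \<ominus> p \<in> Units R"
proof (rule nonP_unit)
  assume p: "p \<in> P"
  show "\<one> \<ominus> p \<in> carrier R" using p P_carr by simp
  show "\<one> \<ominus> p \<notin> P"
  proof
    assume "\<one> \<ominus> p \<in> P"
    then have "(\<one> \<ominus> p) \<oplus> p \<in> P" using p P_add by blast
    moreover have "(\<one> \<ominus> p) \<oplus> p = \<one>" using p P_carr by algebra
    ultimately show False using one_notin_P by simp
  qed
qed

lemma idem_01: "e \<in> carrier R \<Longrightarrow> e \<otimes> e = e \<Longrightarrow> e = \<zero> \<or> e = \<one>"
proof -
  assume e: "e \<in> carrier R" "e \<otimes> e = e"
  have eq: "e \<otimes> (\<one> \<ominus> e) = \<zero>" using e by (simp add: r_distr minus_eq r_minus r_neg)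
  show ?thesis
  proof (cases "e \<in> P")
    case True
    then have "\<one> \<ominus> e \<in> Units R" using one_minus_P_unit by blast
    then have "e = \<zero>" using unit_cancel[of "\<one> \<ominus> e" e] eq e m_comm by simp
    then show ?thesis by simp
  next
    case False
    then have "e \<in> Units R" using nonP_unit e by blast
    then have "\<one> \<ominus> e = \<zero>" using unit_cancel[of e "\<one> \<ominus> e"] eq e by simp
    then have "e = \<one>" using e by (metis one_closed r_right_minus_eq)
    then show ?thesis by simp
  qed
qed

end




context ring
begin

lemma idem_comm:
  assumes "F \<in> carrier R" "A \<in> carrier R" "F \<otimes> F = F" "A \<otimes> F = F \<otimes> A"
  shows "F \<otimes> A = (F \<otimes> A) \<otimes> F"
proof -
  have "F \<otimes> A = (F \<otimes> F) \<otimes> A" by (simp only: assms(3))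
  also have "\<dots> = F \<otimes> (F \<otimes> A)" using assms(1,2) by (simp add: m_assoc)
  also have "\<dots> = F \<otimes> (A \<otimes> F)" by (simp only: assms(4))
  also have "\<dots> = (F \<otimes> A) \<otimes> F" using assms(1,2) by (simp add: m_assoc)
  finally show ?thesis .
qed

lemma idem_compl:
  assumes F: "F \<in> carrier R" "A \<in> carrier R" "F \<otimes> F = F" "A \<otimes> F = F \<otimes> A"
  shows "(\<one> \<ominus> F) \<otimes> (\<one> \<ominus> F) = \<one> \<ominus> F" "A \<otimes> (\<one> \<ominus> F) = (\<one> \<ominus> F) \<otimes> A"
    "(\<one> \<ominus> F) \<otimes> F = \<zero>"
proof -
  have "(\<one> \<ominus> F) \<otimes> (\<one> \<ominus> F) = \<one> \<ominus> F \<ominus> F \<oplus> F \<otimes> F" using F(1) by (simp add: minus_eq l_distr r_distr l_minus r_minus, (algebra)?)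
  also have "\<dots> = \<one> \<ominus> F" using F(1) by (simp add: F(3)) algebra
  finally show "(\<one> \<ominus> F) \<otimes> (\<one> \<ominus> F) = \<one> \<ominus> F" .
  have "A \<otimes> (\<one> \<ominus> F) = A \<ominus> A \<otimes> F" using F(1,2) by (simp add: minus_eq l_distr r_distr l_minus r_minus, (algebra)?)
  also have "\<dots> = A \<ominus> F \<otimes> A" by (simp add: F(4))
  also have "\<dots> = (\<one> \<ominus> F) \<otimes> A" using F(1,2) by (simp add: minus_eq l_distr r_distr l_minus r_minus, (algebra)?)
  finally show "A \<otimes> (\<one> \<ominus> F) = (\<one> \<ominus> F) \<otimes> A" .
  have "(\<one> \<ominus> F) \<otimes> F = F \<ominus> F \<otimes> F" using F(1) by (simp add: minus_eq l_distr r_distr l_minus r_minus, (algebra)?)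
  also have "\<dots> = \<zero>" using F(1) by (simp add: F(3) minus_eq r_neg)
  finally show "(\<one> \<ominus> F) \<otimes> F = \<zero>" .
qed

end

locale lrs = lr + fixes s assumes s: "s \<in> carrier R"
begin

lemma ringT: "ring (M2s R s)"
proof (rule ringI)
  show "abelian_group (M2s R s)"
  proof (rule abelian_groupI, goal_cases)
    case (1 x y) then show ?case by (cases x; cases y) (simp add: M2s_simps)
  next
    case 2 show ?case by (simp add: M2s_simps)
  next
    case (3 x y z) then show ?case by (cases x; cases y; cases z) (simp add: M2s_simps a_assoc)
  next
    case (4 x y) then show ?case by (cases x; cases y) (simp add: M2s_simps a_comm)
  next
    case (5 x) then show ?case by (cases x) (simp add: M2s_simps)
  next
    case (6 x)
    obtain a b c d where x: "x = (a,b,c,d)" by (cases x)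
    show ?case
      by (rule bexI[of _ "(\<ominus>a,\<ominus>b,\<ominus>c,\<ominus>d)"]) (use x 6 in \<open>simp_all add: M2s_simps l_neg\<close>)
  qed
next
  show "monoid (M2s R s)"
  proof (rule monoidI, goal_cases)
    case (1 x y) then show ?case by (cases x; cases y) (simp add: M2s_simps s)
  next
    case 2 show ?case by (simp add: M2s_simps)
  next
    case (3 x y z)
    obtain a b c d where x: "x = (a,b,c,d)" by (cases x)
    obtain a' b' c' d' where y: "y = (a',b',c',d')" by (cases y)
    obtain a'' b'' c'' d'' where z: "z = (a'',b'',c'',d'')" by (cases z)
    have c: "a \<in> carrier R" "b \<in> carrier R" "c \<in> carrier R" "d \<in> carrier R"
      "a' \<in> carrier R" "b' \<in> carrier R" "c' \<in> carrier R" "d' \<in> carrier R"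
      "a'' \<in> carrier R" "b'' \<in> carrier R" "c'' \<in> carrier R" "d'' \<in> carrier R"
      using 3 x y z by (simp_all add: M2s_simps)
    show ?case unfolding x y z M2s_mult using c s by algebra
  next
    case (4 x) then show ?case by (cases x) (simp add: M2s_simps s)
  next
    case (5 x) then show ?case by (cases x) (simp add: M2s_simps s)
  qed
next
  fix x y z assume xyz: "x \<in> carrier (M2s R s)" "y \<in> carrier (M2s R s)" "z \<in> carrier (M2s R s)"
  obtain a b c d where x: "x = (a,b,c,d)" by (cases x)
  obtain a' b' c' d' where y: "y = (a',b',c',d')" by (cases y)
  obtain a'' b'' c'' d'' where z: "z = (a'',b'',c'',d'')" by (cases z)
  have c: "a \<in> carrier R" "b \<in> carrier R" "c \<in> carrier R" "d \<in> carrier R"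
    "a' \<in> carrier R" "b' \<in> carrier R" "c' \<in> carrier R" "d' \<in> carrier R"
    "a'' \<in> carrier R" "b'' \<in> carrier R" "c'' \<in> carrier R" "d'' \<in> carrier R"
    using xyz x y z by (simp_all add: M2s_simps)
  show "(x \<oplus>\<^bsub>M2s R s\<^esub> y) \<otimes>\<^bsub>M2s R s\<^esub> z = x \<otimes>\<^bsub>M2s R s\<^esub> z \<oplus>\<^bsub>M2s R s\<^esub> y \<otimes>\<^bsub>M2s R s\<^esub> z"
    unfolding x y z M2s_mult M2s_add using c s by algebra
  show "z \<otimes>\<^bsub>M2s R s\<^esub> (x \<oplus>\<^bsub>M2s R s\<^esub> y) = z \<otimes>\<^bsub>M2s R s\<^esub> x \<oplus>\<^bsub>M2s R s\<^esub> z \<otimes>\<^bsub>M2s R s\<^esub> y"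
    unfolding x y z M2s_mult M2s_add using c s by algebra
qed

end




context lrs
begin

interpretation T: ring "M2s R s" by (rule ringT)

lemma T_neg: assumes "(a,b,c,d) \<in> carrier (M2s R s)"
  shows "\<ominus>\<^bsub>M2s R s\<^esub> (a,b,c,d) = (\<ominus>a,\<ominus>b,\<ominus>c,\<ominus>d)"
proof -
  have c: "a \<in> carrier R" "b \<in> carrier R" "c \<in> carrier R" "d \<in> carrier R"
    using assms by (simp_all add: M2s_simps)
  show ?thesis by (rule T.minus_equality) (simp_all add: M2s_simps c l_neg)
qed

lemma T_minus: assumes "(a,b,c,d) \<in> carrier (M2s R s)" "(a',b',c',d') \<in> carrier (M2s R s)"
  shows "(a,b,c,d) \<ominus>\<^bsub>M2s R s\<^esub> (a',b',c',d') = (a \<ominus> a', b \<ominus> b', c \<ominus> c', d \<ominus> d')"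
  using assms by (simp add: T.minus_eq T_neg M2s_simps minus_eq)

lemma adj_inv:
  assumes Z: "(a,b,c,d) \<in> carrier (M2s R s)"
    and u: "a \<otimes> d \<ominus> (s \<otimes> s) \<otimes> b \<otimes> c \<in> Units R"
  shows "\<exists>U\<in>carrier (M2s R s). U \<otimes>\<^bsub>M2s R s\<^esub> (a,b,c,d) = \<one>\<^bsub>M2s R s\<^esub>"
proof -
  have ab: "a \<in> carrier R" "b \<in> carrier R" "c \<in> carrier R" "d \<in> carrier R"
    using Z by (simp_all add: M2s_simps)
  define \<delta> where "\<delta> = a \<otimes> d \<ominus> (s \<otimes> s) \<otimes> b \<otimes> c"
  obtain i where i: "i \<in> carrier R" "i \<otimes> \<delta> = \<one>"
    using u unfolding \<delta>_def by (meson Units_inv_closed Units_l_inv)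
  have "(i \<otimes> d, \<ominus> (i \<otimes> b), \<ominus> (i \<otimes> c), i \<otimes> a) \<otimes>\<^bsub>M2s R s\<^esub> (a,b,c,d) = (i \<otimes> \<delta>, \<zero>, \<zero>, i \<otimes> \<delta>)"
    unfolding M2s_mult \<delta>_def using ab i(1) s by algebra
  also have "\<dots> = \<one>\<^bsub>M2s R s\<^esub>" using i by (simp add: M2s_simps)
  finally show ?thesis using ab i by (intro bexI[of _ "(i \<otimes> d, \<ominus> (i \<otimes> b), \<ominus> (i \<otimes> c), i \<otimes> a)"]) (simp_all add: M2s_simps)
qed

definition PM where "PM = {(a,b,c,d). a \<in> P \<and> b \<in> P \<and> c \<in> P \<and> d \<in> P}"

lemma PM_jac:
  assumes Z: "Z \<in> carrier (M2s R s)" "Z \<in> PM"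
  shows "Z \<in> jacobson (M2s R s)"
proof (rule T.jacI[OF Z(1)])
  fix Y assume Y: "Y \<in> carrier (M2s R s)"
  obtain p1 p2 p3 p4 where Ze: "Z = (p1,p2,p3,p4)" by (cases Z)
  obtain y1 y2 y3 y4 where Ye: "Y = (y1,y2,y3,y4)" by (cases Y)
  have p: "p1 \<in> P" "p2 \<in> P" "p3 \<in> P" "p4 \<in> P" using Z(2) Ze by (simp_all add: PM_def)
  have y: "y1 \<in> carrier R" "y2 \<in> carrier R" "y3 \<in> carrier R" "y4 \<in> carrier R"
    using Y Ye by (simp_all add: M2s_simps)
  have pc: "p1 \<in> carrier R" "p2 \<in> carrier R" "p3 \<in> carrier R" "p4 \<in> carrier R" using p P_carr by auto
  define w1 where "w1 = y1 \<otimes> p1 \<oplus> (s \<otimes> s) \<otimes> y2 \<otimes> p3"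
  define w2 where "w2 = y1 \<otimes> p2 \<oplus> y2 \<otimes> p4"
  define w3 where "w3 = y3 \<otimes> p1 \<oplus> y4 \<otimes> p3"
  define w4 where "w4 = (s \<otimes> s) \<otimes> y3 \<otimes> p2 \<oplus> y4 \<otimes> p4"
  have W: "Y \<otimes>\<^bsub>M2s R s\<^esub> Z = (w1,w2,w3,w4)" unfolding Ze Ye M2s_mult w1_def w2_def w3_def w4_def ..
  have wP: "w1 \<in> P" "w2 \<in> P" "w3 \<in> P" "w4 \<in> P"
    unfolding w1_def w2_def w3_def w4_def using p y s by (simp_all add: P_add P_lmult)
  have wc: "w1 \<in> carrier R" "w2 \<in> carrier R" "w3 \<in> carrier R" "w4 \<in> carrier R" using wP P_carr by auto
  have e: "\<one>\<^bsub>M2s R s\<^esub> \<ominus>\<^bsub>M2s R s\<^esub> Y \<otimes>\<^bsub>M2s R s\<^esub> Z = (\<one> \<ominus> w1, \<zero> \<ominus> w2, \<zero> \<ominus> w3, \<one> \<ominus> w4)"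
    unfolding W M2s_one by (rule T_minus) (simp_all add: M2s_simps wc)
  define q where "q = w1 \<oplus> w4 \<ominus> w1 \<otimes> w4 \<oplus> (s \<otimes> s) \<otimes> w2 \<otimes> w3"
  have qP: "q \<in> P" unfolding q_def using wP wc s by (simp add: P_add P_minus P_lmult P_rmult)
  have qc: "q \<in> carrier R" using qP P_carr by auto
  have "(\<one> \<ominus> w1) \<otimes> (\<one> \<ominus> w4) \<ominus> (s \<otimes> s) \<otimes> (\<zero> \<ominus> w2) \<otimes> (\<zero> \<ominus> w3) = \<one> \<ominus> q"
    unfolding q_def using wc s by algebra
  then have "(\<one> \<ominus> w1) \<otimes> (\<one> \<ominus> w4) \<ominus> (s \<otimes> s) \<otimes> (\<zero> \<ominus> w2) \<otimes> (\<zero> \<ominus> w3) \<in> Units R"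
    using one_minus_P_unit[OF qP] by simp
  then obtain U where "U \<in> carrier (M2s R s)"
    "U \<otimes>\<^bsub>M2s R s\<^esub> (\<one> \<ominus> w1, \<zero> \<ominus> w2, \<zero> \<ominus> w3, \<one> \<ominus> w4) = \<one>\<^bsub>M2s R s\<^esub>"
    using adj_inv[of "\<one> \<ominus> w1" "\<zero> \<ominus> w2" "\<zero> \<ominus> w3" "\<one> \<ominus> w4"] wc by (auto simp: M2s_simps)
  then show "\<exists>u\<in>carrier (M2s R s). u \<otimes>\<^bsub>M2s R s\<^esub> (\<one>\<^bsub>M2s R s\<^esub> \<ominus>\<^bsub>M2s R s\<^esub> Y \<otimes>\<^bsub>M2s R s\<^esub> Z) = \<one>\<^bsub>M2s R s\<^esub>"
    using e by auto
qed


lemma c1: "x = y \<oplus> k \<otimes> h \<Longrightarrow> h = \<zero> \<Longrightarrow> y \<in> carrier R \<Longrightarrow> k \<in> carrier R \<Longrightarrow> x = y"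
  by simp

lemma c2: "x = y \<oplus> k \<otimes> h \<oplus> kb \<otimes> hb \<Longrightarrow> h = \<zero> \<Longrightarrow> hb = \<zero> \<Longrightarrow> y \<in> carrier R \<Longrightarrow> k \<in> carrier R \<Longrightarrow> kb \<in> carrier R \<Longrightarrow> x = y"
  by simp

lemma c3: "x = y \<oplus> k \<otimes> h \<oplus> kb \<otimes> hb \<oplus> kc \<otimes> hc \<Longrightarrow> h = \<zero> \<Longrightarrow> hb = \<zero> \<Longrightarrow> hc = \<zero> \<Longrightarrow> y \<in> carrier R \<Longrightarrow> k \<in> carrier R \<Longrightarrow> kb \<in> carrier R \<Longrightarrow> kc \<in> carrier R \<Longrightarrow> x = y"
  by simp

lemma EXE:
  assumes f: "f1 \<in> carrier R" "f2 \<in> carrier R" "f3 \<in> carrier R" "f4 \<in> carrier R"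
    and x: "x1 \<in> carrier R" "x2 \<in> carrier R" "x3 \<in> carrier R" "x4 \<in> carrier R"
    and H: "f1 \<oplus> f4 \<ominus> \<one> = \<zero>" and Rl: "f1 \<ominus> f1 \<otimes> f1 \<ominus> (s \<otimes> s) \<otimes> f2 \<otimes> f3 = \<zero>"
  shows "((f1,f2,f3,f4) \<otimes>\<^bsub>M2s R s\<^esub> (x1,x2,x3,x4)) \<otimes>\<^bsub>M2s R s\<^esub> (f1,f2,f3,f4) =
    ((f1 \<otimes> x1 \<oplus> (s \<otimes> s) \<otimes> f2 \<otimes> x3 \<oplus> ((s \<otimes> s) \<otimes> f3 \<otimes> x2 \<oplus> f4 \<otimes> x4)) \<otimes> f1,
     (f1 \<otimes> x1 \<oplus> (s \<otimes> s) \<otimes> f2 \<otimes> x3 \<oplus> ((s \<otimes> s) \<otimes> f3 \<otimes> x2 \<oplus> f4 \<otimes> x4)) \<otimes> f2,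
     (f1 \<otimes> x1 \<oplus> (s \<otimes> s) \<otimes> f2 \<otimes> x3 \<oplus> ((s \<otimes> s) \<otimes> f3 \<otimes> x2 \<oplus> f4 \<otimes> x4)) \<otimes> f3,
     (f1 \<otimes> x1 \<oplus> (s \<otimes> s) \<otimes> f2 \<otimes> x3 \<oplus> ((s \<otimes> s) \<otimes> f3 \<otimes> x2 \<oplus> f4 \<otimes> x4)) \<otimes> f4)"
  unfolding M2s_mult prod.inject
proof (intro conjI)
  note cs = f x s
  show "(f1 \<otimes> x1 \<oplus> s \<otimes> s \<otimes> f2 \<otimes> x3) \<otimes> f1 \<oplus> s \<otimes> s \<otimes> (f1 \<otimes> x2 \<oplus> f2 \<otimes> x4) \<otimes> f3 =
    (f1 \<otimes> x1 \<oplus> s \<otimes> s \<otimes> f2 \<otimes> x3 \<oplus> (s \<otimes> s \<otimes> f3 \<otimes> x2 \<oplus> f4 \<otimes> x4)) \<otimes> f1"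
    by (rule c2[where k="\<ominus> (f1 \<otimes> x4)" and h="f1 \<oplus> f4 \<ominus> \<one>" and kb="\<ominus> x4" and hb="f1 \<ominus> f1 \<otimes> f1 \<ominus> (s \<otimes> s) \<otimes> f2 \<otimes> f3"],
        (use cs in algebra), fact H, fact Rl, (use cs in simp_all))
  show "(f1 \<otimes> x1 \<oplus> s \<otimes> s \<otimes> f2 \<otimes> x3) \<otimes> f2 \<oplus> (f1 \<otimes> x2 \<oplus> f2 \<otimes> x4) \<otimes> f4 =
    (f1 \<otimes> x1 \<oplus> s \<otimes> s \<otimes> f2 \<otimes> x3 \<oplus> (s \<otimes> s \<otimes> f3 \<otimes> x2 \<oplus> f4 \<otimes> x4)) \<otimes> f2"
    by (rule c2[where k="f1 \<otimes> x2" and h="f1 \<oplus> f4 \<ominus> \<one>" and kb="x2" and hb="f1 \<ominus> f1 \<otimes> f1 \<ominus> (s \<otimes> s) \<otimes> f2 \<otimes> f3"],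
        (use cs in algebra), fact H, fact Rl, (use cs in simp_all))
  show "(f3 \<otimes> x1 \<oplus> f4 \<otimes> x3) \<otimes> f1 \<oplus> (s \<otimes> s \<otimes> f3 \<otimes> x2 \<oplus> f4 \<otimes> x4) \<otimes> f3 =
    (f1 \<otimes> x1 \<oplus> s \<otimes> s \<otimes> f2 \<otimes> x3 \<oplus> (s \<otimes> s \<otimes> f3 \<otimes> x2 \<oplus> f4 \<otimes> x4)) \<otimes> f3"
    by (rule c2[where k="f1 \<otimes> x3" and h="f1 \<oplus> f4 \<ominus> \<one>" and kb="x3" and hb="f1 \<ominus> f1 \<otimes> f1 \<ominus> (s \<otimes> s) \<otimes> f2 \<otimes> f3"],
        (use cs in algebra), fact H, fact Rl, (use cs in simp_all))
  show "s \<otimes> s \<otimes> (f3 \<otimes> x1 \<oplus> f4 \<otimes> x3) \<otimes> f2 \<oplus> (s \<otimes> s \<otimes> f3 \<otimes> x2 \<oplus> f4 \<otimes> x4) \<otimes> f4 =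
    (f1 \<otimes> x1 \<oplus> s \<otimes> s \<otimes> f2 \<otimes> x3 \<oplus> (s \<otimes> s \<otimes> f3 \<otimes> x2 \<oplus> f4 \<otimes> x4)) \<otimes> f4"
    by (rule c2[where k="\<ominus> (f1 \<otimes> x1)" and h="f1 \<oplus> f4 \<ominus> \<one>" and kb="\<ominus> x1" and hb="f1 \<ominus> f1 \<otimes> f1 \<ominus> (s \<otimes> s) \<otimes> f2 \<otimes> f3"],
        (use cs in algebra), fact H, fact Rl, (use cs in simp_all))
qed

lemma scal_jac:
  assumes g: "\<gamma> \<in> Units R" and F: "(f1,f2,f3,f4) \<in> carrier (M2s R s)"
    and J: "(\<gamma> \<otimes> f1, \<gamma> \<otimes> f2, \<gamma> \<otimes> f3, \<gamma> \<otimes> f4) \<in> jacobson (M2s R s)"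
  shows "(f1,f2,f3,f4) \<in> jacobson (M2s R s)"
proof -
  obtain i where i: "i \<in> carrier R" "i \<otimes> \<gamma> = \<one>" using g by (meson Units_inv_closed Units_l_inv)
  have gc: "\<gamma> \<in> carrier R" using g by (rule Units_closed)
  have fc: "f1 \<in> carrier R" "f2 \<in> carrier R" "f3 \<in> carrier R" "f4 \<in> carrier R" using F by (simp_all add: M2s_simps)
  have "(i, \<zero>, \<zero>, i) \<otimes>\<^bsub>M2s R s\<^esub> (\<gamma> \<otimes> f1, \<gamma> \<otimes> f2, \<gamma> \<otimes> f3, \<gamma> \<otimes> f4) = ((i \<otimes> \<gamma>) \<otimes> f1, (i \<otimes> \<gamma>) \<otimes> f2, (i \<otimes> \<gamma>) \<otimes> f3, (i \<otimes> \<gamma>) \<otimes> f4)"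
    unfolding M2s_mult using i(1) gc fc s by algebra
  also have "\<dots> = (f1,f2,f3,f4)" using i fc by simp
  finally have eq: "(i, \<zero>, \<zero>, i) \<otimes>\<^bsub>M2s R s\<^esub> (\<gamma> \<otimes> f1, \<gamma> \<otimes> f2, \<gamma> \<otimes> f3, \<gamma> \<otimes> f4) = (f1,f2,f3,f4)" .
  have "(i, \<zero>, \<zero>, i) \<otimes>\<^bsub>M2s R s\<^esub> (\<gamma> \<otimes> f1, \<gamma> \<otimes> f2, \<gamma> \<otimes> f3, \<gamma> \<otimes> f4) \<in> jacobson (M2s R s)"
    by (rule T.jac_lmult[OF _ J]) (use i in \<open>simp add: M2s_simps\<close>)
  then show ?thesis using eq by simp
qed

end



context lrs
begin

interpretation T: ring "M2s R s" by (rule ringT)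

lemma d0: "x \<ominus> y = \<zero> \<Longrightarrow> x \<in> carrier R \<Longrightarrow> y \<in> carrier R \<Longrightarrow> x = y"
  by (simp add: r_right_minus_eq)

lemma d1: "x \<ominus> (y \<oplus> k \<otimes> h) = \<zero> \<Longrightarrow> h = \<zero> \<Longrightarrow> x \<in> carrier R \<Longrightarrow> y \<in> carrier R \<Longrightarrow> k \<in> carrier R \<Longrightarrow> x = y"
  by (simp add: r_right_minus_eq)

lemma d2: "x \<ominus> (y \<oplus> k \<otimes> h \<oplus> kb \<otimes> hb) = \<zero> \<Longrightarrow> h = \<zero> \<Longrightarrow> hb = \<zero> \<Longrightarrow> x \<in> carrier R \<Longrightarrow> y \<in> carrier R \<Longrightarrow> k \<in> carrier R \<Longrightarrow> kb \<in> carrier R \<Longrightarrow> x = y"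
  by (simp add: r_right_minus_eq)

lemma d3: "x \<ominus> (y \<oplus> k \<otimes> h \<oplus> kb \<otimes> hb \<oplus> kc \<otimes> hc) = \<zero> \<Longrightarrow> h = \<zero> \<Longrightarrow> hb = \<zero> \<Longrightarrow> hc = \<zero> \<Longrightarrow> x \<in> carrier R \<Longrightarrow> y \<in> carrier R \<Longrightarrow> k \<in> carrier R \<Longrightarrow> kb \<in> carrier R \<Longrightarrow> kc \<in> carrier R \<Longrightarrow> x = y"
  by (simp add: r_right_minus_eq)

lemma eqz: "x = y \<Longrightarrow> y \<in> carrier R \<Longrightarrow> x \<ominus> y = \<zero>"
  by (simp add: minus_eq r_neg)

lemma bwd:
  assumes A: "A \<in> carrier (M2s R s)" and Ae: "A = (a,b,c,d)"
    and ac: "a \<in> carrier R" "b \<in> carrier R" "c \<in> carrier R" "d \<in> carrier R"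
    and \<alpha>: "\<alpha> \<in> P" "\<alpha> \<otimes> \<alpha> \<ominus> (a \<oplus> d) \<otimes> \<alpha> \<oplus> (a \<otimes> d \<ominus> (s \<otimes> s) \<otimes> b \<otimes> c) = \<zero>"
    and j: "j \<in> P" "(\<one> \<oplus> j) \<otimes> (\<one> \<oplus> j) \<ominus> (a \<oplus> d) \<otimes> (\<one> \<oplus> j) \<oplus> (a \<otimes> d \<ominus> (s \<otimes> s) \<otimes> b \<otimes> c) = \<zero>"
  shows "strongly_J_clean (M2s R s) A"
proof -
  have \<alpha>c: "\<alpha> \<in> carrier R" and jc: "j \<in> carrier R" using \<alpha> j P_carr by auto
  define \<beta> where "\<beta> = \<one> \<oplus> j"
  have \<beta>c: "\<beta> \<in> carrier R" unfolding \<beta>_def using jc by simp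
  note cs = ac \<alpha>c jc \<beta>c s
  have h\<beta>: "\<beta> \<otimes> \<beta> \<ominus> (a \<oplus> d) \<otimes> \<beta> \<oplus> (a \<otimes> d \<ominus> (s \<otimes> s) \<otimes> b \<otimes> c) = \<zero>" using j(2) unfolding \<beta>_def .
  have vP: "\<alpha> \<ominus> j \<in> P" using \<alpha> j by (simp add: P_minus)
  have v: "\<beta> \<ominus> \<alpha> = \<one> \<ominus> (\<alpha> \<ominus> j)" unfolding \<beta>_def using cs by algebra
  have vU: "\<beta> \<ominus> \<alpha> \<in> Units R" using one_minus_P_unit[OF vP] v by simp
  have Ht: "\<alpha> \<oplus> \<beta> \<ominus> (a \<oplus> d) = \<zero>"
  proof (rule unit_cancel[OF vU])
    show "\<alpha> \<oplus> \<beta> \<ominus> (a \<oplus> d) \<in> carrier R" using cs by simp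
    show "(\<beta> \<ominus> \<alpha>) \<otimes> (\<alpha> \<oplus> \<beta> \<ominus> (a \<oplus> d)) = \<zero>"
      by (rule c2[where k="\<one>" and h="\<beta> \<otimes> \<beta> \<ominus> (a \<oplus> d) \<otimes> \<beta> \<oplus> (a \<otimes> d \<ominus> (s \<otimes> s) \<otimes> b \<otimes> c)"
            and kb="\<ominus> \<one>" and hb="\<alpha> \<otimes> \<alpha> \<ominus> (a \<oplus> d) \<otimes> \<alpha> \<oplus> (a \<otimes> d \<ominus> (s \<otimes> s) \<otimes> b \<otimes> c)"],
          (use cs in algebra), fact h\<beta>, fact \<alpha>(2), (use cs in simp_all))
  qed
  have Hd: "\<alpha> \<otimes> \<beta> \<ominus> (a \<otimes> d \<ominus> (s \<otimes> s) \<otimes> b \<otimes> c) = \<zero>"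
    by (rule c2[where k="\<ominus> \<one>" and h="\<alpha> \<otimes> \<alpha> \<ominus> (a \<oplus> d) \<otimes> \<alpha> \<oplus> (a \<otimes> d \<ominus> (s \<otimes> s) \<otimes> b \<otimes> c)"
            and kb="\<alpha>" and hb="\<alpha> \<oplus> \<beta> \<ominus> (a \<oplus> d)"],
          (use cs in algebra), fact \<alpha>(2), fact Ht, (use cs in simp_all))
  obtain w where w: "w \<in> carrier R" "w \<otimes> (\<beta> \<ominus> \<alpha>) = \<one>" using vU by (meson Units_inv_closed Units_l_inv)
  have Hw: "w \<otimes> (\<beta> \<ominus> \<alpha>) \<ominus> \<one> = \<zero>" using w by (simp add: eqz)
  note cs = cs w(1)
  define E where "E = (w \<otimes> (a \<ominus> \<alpha>), w \<otimes> b, w \<otimes> c, w \<otimes> (d \<ominus> \<alpha>))"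
  have Ec: "E \<in> carrier (M2s R s)" unfolding E_def using cs by (simp add: M2s_simps)
  define n1 where "n1 = a \<ominus> \<alpha>"
  define n4 where "n4 = d \<ominus> \<alpha>"
  define v where "v = \<beta> \<ominus> \<alpha>"
  have nc: "n1 \<in> carrier R" "n4 \<in> carrier R" "v \<in> carrier R" unfolding n1_def n4_def v_def using cs by simp_all
  have wv: "w \<otimes> v = \<one>" unfolding v_def by (rule w(2))
  have sum: "n1 \<oplus> n4 = v"
    by (rule c1[where k="\<ominus> \<one>" and h="\<alpha> \<oplus> \<beta> \<ominus> (a \<oplus> d)"],
        unfold n1_def n4_def v_def, (use cs in algebra), fact Ht, (use cs in simp_all))
  have q: "(s \<otimes> s) \<otimes> b \<otimes> c = n1 \<otimes> n4"
    by (rule c2[where k="\<one>" and h="\<alpha> \<otimes> \<beta> \<ominus> (a \<otimes> d \<ominus> (s \<otimes> s) \<otimes> b \<otimes> c)" and kb="\<ominus> \<alpha>" and hb="\<alpha> \<oplus> \<beta> \<ominus> (a \<oplus> d)"],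
        unfold n1_def n4_def, (use cs in algebra), fact Hd, fact Ht, (use cs in simp_all))
  note cs = cs nc
  have E_n: "E = (w \<otimes> n1, w \<otimes> b, w \<otimes> c, w \<otimes> n4)" unfolding E_def n1_def n4_def ..
  have idem: "E \<otimes>\<^bsub>M2s R s\<^esub> E = E"
    unfolding E_n M2s_mult prod.inject
  proof (intro conjI)
    have "w \<otimes> n1 \<otimes> (w \<otimes> n1) \<oplus> s \<otimes> s \<otimes> (w \<otimes> b) \<otimes> (w \<otimes> c) = (w \<otimes> w) \<otimes> (n1 \<otimes> n1 \<oplus> (s \<otimes> s) \<otimes> b \<otimes> c)"
      using cs by algebra
    also have "\<dots> = (w \<otimes> w) \<otimes> (n1 \<otimes> n1 \<oplus> n1 \<otimes> n4)" by (simp only: q)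
    also have "\<dots> = (w \<otimes> n1) \<otimes> (w \<otimes> (n1 \<oplus> n4))" using cs by algebra
    also have "\<dots> = w \<otimes> n1" using cs by (simp add: sum wv)
    finally show "w \<otimes> n1 \<otimes> (w \<otimes> n1) \<oplus> s \<otimes> s \<otimes> (w \<otimes> b) \<otimes> (w \<otimes> c) = w \<otimes> n1" .
    have "w \<otimes> n1 \<otimes> (w \<otimes> b) \<oplus> w \<otimes> b \<otimes> (w \<otimes> n4) = (w \<otimes> b) \<otimes> (w \<otimes> (n1 \<oplus> n4))"
      using cs by algebra
    also have "\<dots> = w \<otimes> b" using cs by (simp add: sum wv)
    finally show "w \<otimes> n1 \<otimes> (w \<otimes> b) \<oplus> w \<otimes> b \<otimes> (w \<otimes> n4) = w \<otimes> b" .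
    have "w \<otimes> c \<otimes> (w \<otimes> n1) \<oplus> w \<otimes> n4 \<otimes> (w \<otimes> c) = (w \<otimes> c) \<otimes> (w \<otimes> (n1 \<oplus> n4))"
      using cs by algebra
    also have "\<dots> = w \<otimes> c" using cs by (simp add: sum wv)
    finally show "w \<otimes> c \<otimes> (w \<otimes> n1) \<oplus> w \<otimes> n4 \<otimes> (w \<otimes> c) = w \<otimes> c" .
    have "s \<otimes> s \<otimes> (w \<otimes> c) \<otimes> (w \<otimes> b) \<oplus> w \<otimes> n4 \<otimes> (w \<otimes> n4) = (w \<otimes> w) \<otimes> ((s \<otimes> s) \<otimes> b \<otimes> c \<oplus> n4 \<otimes> n4)"
      using cs by algebra
    also have "\<dots> = (w \<otimes> w) \<otimes> (n1 \<otimes> n4 \<oplus> n4 \<otimes> n4)" by (simp only: q)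
    also have "\<dots> = (w \<otimes> n4) \<otimes> (w \<otimes> (n1 \<oplus> n4))" using cs by algebra
    also have "\<dots> = w \<otimes> n4" using cs by (simp add: sum wv)
    finally show "s \<otimes> s \<otimes> (w \<otimes> c) \<otimes> (w \<otimes> b) \<oplus> w \<otimes> n4 \<otimes> (w \<otimes> n4) = w \<otimes> n4" .
  qed
  have comm: "A \<otimes>\<^bsub>M2s R s\<^esub> E = E \<otimes>\<^bsub>M2s R s\<^esub> A"
    unfolding Ae E_def M2s_mult prod.inject
    by (intro conjI; (use cs in algebra))
  have wP: "\<one> \<ominus> w \<in> P"
  proof -
    have "\<one> \<ominus> w = \<ominus> (w \<otimes> (\<alpha> \<ominus> j)) \<ominus> (w \<otimes> (\<beta> \<ominus> \<alpha>) \<ominus> \<one>)" unfolding \<beta>_def using cs by algebra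
    also have "\<dots> = \<ominus> (w \<otimes> (\<alpha> \<ominus> j))" using cs by (simp only: Hw, simp add: minus_eq)
    finally show ?thesis using vP cs by (simp add: P_neg P_lmult)
  qed
  have "A \<ominus>\<^bsub>M2s R s\<^esub> E = (a \<ominus> w \<otimes> (a \<ominus> \<alpha>), b \<ominus> w \<otimes> b, c \<ominus> w \<otimes> c, d \<ominus> w \<otimes> (d \<ominus> \<alpha>))"
    unfolding Ae E_def by (rule T_minus) (use cs in \<open>simp_all add: M2s_simps\<close>)
  also have "\<dots> = ((\<one> \<ominus> w) \<otimes> a \<oplus> w \<otimes> \<alpha>, (\<one> \<ominus> w) \<otimes> b, (\<one> \<ominus> w) \<otimes> c, (\<one> \<ominus> w) \<otimes> d \<oplus> w \<otimes> \<alpha>)"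
    unfolding prod.inject by (intro conjI; (use cs in algebra))
  finally have AE: "A \<ominus>\<^bsub>M2s R s\<^esub> E = ((\<one> \<ominus> w) \<otimes> a \<oplus> w \<otimes> \<alpha>, (\<one> \<ominus> w) \<otimes> b, (\<one> \<ominus> w) \<otimes> c, (\<one> \<ominus> w) \<otimes> d \<oplus> w \<otimes> \<alpha>)" .
  have "A \<ominus>\<^bsub>M2s R s\<^esub> E \<in> PM" unfolding AE PM_def using wP \<alpha>(1) cs by (simp add: P_add P_rmult P_lmult)
  moreover have "A \<ominus>\<^bsub>M2s R s\<^esub> E \<in> carrier (M2s R s)" using A Ec by simp
  ultimately have "A \<ominus>\<^bsub>M2s R s\<^esub> E \<in> jacobson (M2s R s)" using PM_jac by blast
  then show ?thesis unfolding strongly_J_clean_def using A Ec idem comm by blast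
qed


lemma fwd:
  assumes A: "A \<in> carrier (M2s R s)" and Ae: "A = (a,b,c,d)"
    and ac: "a \<in> carrier R" "b \<in> carrier R" "c \<in> carrier R" "d \<in> carrier R"
    and E: "E \<in> carrier (M2s R s)" "E \<otimes>\<^bsub>M2s R s\<^esub> E = E" "A \<otimes>\<^bsub>M2s R s\<^esub> E = E \<otimes>\<^bsub>M2s R s\<^esub> A" "A \<ominus>\<^bsub>M2s R s\<^esub> E \<in> jacobson (M2s R s)"
    and nz: "E \<noteq> \<zero>\<^bsub>M2s R s\<^esub>" and n1: "E \<noteq> \<one>\<^bsub>M2s R s\<^esub>"
  shows "\<exists>\<alpha> \<beta>. \<alpha> \<in> P \<and> \<beta> \<ominus> \<one> \<in> P \<and> \<beta> \<in> carrier R \<and>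
     \<alpha> \<otimes> \<alpha> \<ominus> (a \<oplus> d) \<otimes> \<alpha> \<oplus> (a \<otimes> d \<ominus> (s \<otimes> s) \<otimes> b \<otimes> c) = \<zero> \<and>
     \<beta> \<otimes> \<beta> \<ominus> (a \<oplus> d) \<otimes> \<beta> \<oplus> (a \<otimes> d \<ominus> (s \<otimes> s) \<otimes> b \<otimes> c) = \<zero>"
proof -
  obtain e1 e2 e3 e4 where Ee: "E = (e1,e2,e3,e4)" by (cases E)
  have ec: "e1 \<in> carrier R" "e2 \<in> carrier R" "e3 \<in> carrier R" "e4 \<in> carrier R"
    using E(1) Ee by (simp_all add: M2s_simps)
  note cs = ac ec s
  have "(e1 \<otimes> e1 \<oplus> (s \<otimes> s) \<otimes> e2 \<otimes> e3, e1 \<otimes> e2 \<oplus> e2 \<otimes> e4, e3 \<otimes> e1 \<oplus> e4 \<otimes> e3, (s \<otimes> s) \<otimes> e3 \<otimes> e2 \<oplus> e4 \<otimes> e4) = (e1,e2,e3,e4)"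
    using E(2) unfolding Ee M2s_mult .
  then have i1: "e1 \<otimes> e1 \<oplus> (s \<otimes> s) \<otimes> e2 \<otimes> e3 = e1" and i2: "e1 \<otimes> e2 \<oplus> e2 \<otimes> e4 = e2"
    and i3: "e3 \<otimes> e1 \<oplus> e4 \<otimes> e3 = e3" and i4: "(s \<otimes> s) \<otimes> e3 \<otimes> e2 \<oplus> e4 \<otimes> e4 = e4"
    by (simp_all only: prod.inject)
  have z1: "e1 \<otimes> e1 \<oplus> (s \<otimes> s) \<otimes> e2 \<otimes> e3 \<ominus> e1 = \<zero>" by (rule eqz[OF i1]) (use cs in simp)
  have z2: "e1 \<otimes> e2 \<oplus> e2 \<otimes> e4 \<ominus> e2 = \<zero>" by (rule eqz[OF i2]) (use cs in simp)
  have z3: "e3 \<otimes> e1 \<oplus> e4 \<otimes> e3 \<ominus> e3 = \<zero>" by (rule eqz[OF i3]) (use cs in simp)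
  have z4: "(s \<otimes> s) \<otimes> e3 \<otimes> e2 \<oplus> e4 \<otimes> e4 \<ominus> e4 = \<zero>" by (rule eqz[OF i4]) (use cs in simp)
  define u where "u = e1 \<oplus> e4 \<ominus> \<one>"
  have uc: "u \<in> carrier R" unfolding u_def using cs by simp
  have hu2: "e2 \<otimes> u = \<zero>"
    by (rule c1[where k="\<one>" and h="e1 \<otimes> e2 \<oplus> e2 \<otimes> e4 \<ominus> e2"],
        unfold u_def, (use cs in algebra), fact z2, (use cs uc in simp_all))
  have hu3: "e3 \<otimes> u = \<zero>"
    by (rule c1[where k="\<one>" and h="e3 \<otimes> e1 \<oplus> e4 \<otimes> e3 \<ominus> e3"],
        unfold u_def, (use cs in algebra), fact z3, (use cs uc in simp_all))
  have hX2: "(e1 \<ominus> e4) \<otimes> u = \<zero>"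
    by (rule c2[where k="\<one>" and h="e1 \<otimes> e1 \<oplus> (s \<otimes> s) \<otimes> e2 \<otimes> e3 \<ominus> e1"
          and kb="\<ominus> \<one>" and hb="(s \<otimes> s) \<otimes> e3 \<otimes> e2 \<oplus> e4 \<otimes> e4 \<ominus> e4"],
        unfold u_def, (use cs in algebra), fact z1, fact z4, (use cs uc in simp_all))
  have u0: "u = \<zero>"
  proof (cases "u \<in> P")
    case False
    then have uU: "u \<in> Units R" using nonP_unit uc by blast
    have "u \<otimes> e2 = \<zero>" using hu2 m_comm[of u e2] uc cs by simp
    then have e2z: "e2 = \<zero>" using unit_cancel[OF uU] cs by blast
    have "u \<otimes> e3 = \<zero>" using hu3 m_comm[of u e3] uc cs by simp
    then have e3z: "e3 = \<zero>" using unit_cancel[OF uU] cs by blast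
    have "u \<otimes> (e1 \<ominus> e4) = \<zero>" using hX2 m_comm[of u "e1 \<ominus> e4"] uc cs by simp
    then have "e1 \<ominus> e4 = \<zero>" using unit_cancel[OF uU] cs by simp
    then have e14: "e1 = e4" using d0 cs by blast
    have "e1 \<otimes> e1 = e1" using i1 e2z cs s by simp
    then have "e1 = \<zero> \<or> e1 = \<one>" using idem_01 cs by blast
    then have "E = \<zero>\<^bsub>M2s R s\<^esub> \<or> E = \<one>\<^bsub>M2s R s\<^esub>" using Ee e2z e3z e14 by (auto simp: M2s_simps)
    then show ?thesis using nz n1 by blast
  next
    case True
    have X1: "u \<otimes> (e1 \<ominus> e1 \<otimes> e1) = \<zero>"
      by (rule c2[where k="\<ominus> u" and h="e1 \<otimes> e1 \<oplus> (s \<otimes> s) \<otimes> e2 \<otimes> e3 \<ominus> e1"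
            and kb="(s \<otimes> s) \<otimes> e3" and hb="e2 \<otimes> u"],
          (use cs uc in algebra), fact z1, fact hu2, (use cs uc in simp_all))
    have ue4: "u \<otimes> e4 = u \<otimes> e1"
    proof -
      have "u \<otimes> e1 \<ominus> u \<otimes> e4 = (e1 \<ominus> e4) \<otimes> u" using cs uc by algebra
      then have "u \<otimes> e1 \<ominus> u \<otimes> e4 = \<zero>" using hX2 by simp
      then show ?thesis using cs uc d0[of "u \<otimes> e1" "u \<otimes> e4"] by simp
    qed
    have ue11: "u \<otimes> (e1 \<otimes> e1) = u \<otimes> e1"
    proof -
      have "u \<otimes> e1 \<ominus> u \<otimes> (e1 \<otimes> e1) = u \<otimes> (e1 \<ominus> e1 \<otimes> e1)" using cs uc by algebra
      then have "u \<otimes> e1 \<ominus> u \<otimes> (e1 \<otimes> e1) = \<zero>" using X1 by simp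
      then show ?thesis using cs uc d0[of "u \<otimes> e1" "u \<otimes> (e1 \<otimes> e1)"] by simp
    qed
    have um1: "u \<ominus> \<one> = e1 \<oplus> e4 \<ominus> \<one> \<ominus> \<one>" unfolding u_def ..
    have "u \<otimes> e1 \<otimes> (u \<ominus> \<one>) = u \<otimes> e1 \<otimes> (e1 \<oplus> e4 \<ominus> \<one> \<ominus> \<one>)" by (simp only: um1)
    also have "\<dots> = u \<otimes> (e1 \<otimes> e1) \<oplus> e1 \<otimes> (u \<otimes> e4) \<ominus> u \<otimes> e1 \<ominus> u \<otimes> e1" using cs uc by algebra
    also have "\<dots> = u \<otimes> (e1 \<otimes> e1) \<oplus> e1 \<otimes> (u \<otimes> e1) \<ominus> u \<otimes> e1 \<ominus> u \<otimes> e1" by (simp only: ue4)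
    also have "\<dots> = u \<otimes> (e1 \<otimes> e1) \<oplus> u \<otimes> (e1 \<otimes> e1) \<ominus> u \<otimes> e1 \<ominus> u \<otimes> e1" using cs uc by algebra
    also have "\<dots> = u \<otimes> e1 \<oplus> u \<otimes> e1 \<ominus> u \<otimes> e1 \<ominus> u \<otimes> e1" by (simp only: ue11)
    also have "\<dots> = \<zero>" using cs uc by algebra
    finally have Y1: "u \<otimes> e1 \<otimes> (u \<ominus> \<one>) = \<zero>" .
    have u1U: "u \<ominus> \<one> \<in> Units R"
    proof (rule nonP_unit)
      show "u \<ominus> \<one> \<in> carrier R" using uc by simp
      show "u \<ominus> \<one> \<notin> P"
      proof
        assume "u \<ominus> \<one> \<in> P"
        then have "u \<ominus> (u \<ominus> \<one>) \<in> P" using True P_minus by blast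
        moreover have "u \<ominus> (u \<ominus> \<one>) = \<one>" using uc by algebra
        ultimately show False using one_notin_P by simp
      qed
    qed
    have "(u \<ominus> \<one>) \<otimes> (u \<otimes> e1) = u \<otimes> e1 \<otimes> (u \<ominus> \<one>)" by (rule m_comm) (use uc cs in simp_all)
    then have "(u \<ominus> \<one>) \<otimes> (u \<otimes> e1) = \<zero>" using Y1 by simp
    then have ue1: "u \<otimes> e1 = \<zero>" using unit_cancel[OF u1U] uc cs by simp
    have up1: "u \<oplus> \<one> = e1 \<oplus> e4" unfolding u_def using cs by algebra
    have "u \<otimes> (u \<oplus> \<one>) = u \<otimes> (e1 \<oplus> e4)" by (simp only: up1)
    also have "\<dots> = u \<otimes> e1 \<oplus> u \<otimes> e4" using cs uc by algebra
    also have "\<dots> = \<zero>" using ue1 ue4 by simp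
    finally have Y2: "u \<otimes> (u \<oplus> \<one>) = \<zero>" .
    have u2U: "u \<oplus> \<one> \<in> Units R"
    proof (rule nonP_unit)
      show "u \<oplus> \<one> \<in> carrier R" using uc by simp
      show "u \<oplus> \<one> \<notin> P"
      proof
        assume "u \<oplus> \<one> \<in> P"
        then have "(u \<oplus> \<one>) \<ominus> u \<in> P" using True P_minus by blast
        moreover have "(u \<oplus> \<one>) \<ominus> u = \<one>" using uc by algebra
        ultimately show False using one_notin_P by simp
      qed
    qed
    have "(u \<oplus> \<one>) \<otimes> u = u \<otimes> (u \<oplus> \<one>)" by (rule m_comm) (use uc in simp_all)
    then have "(u \<oplus> \<one>) \<otimes> u = \<zero>" using Y2 by simp
    then show "u = \<zero>" using unit_cancel[OF u2U] uc by simp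
  qed
  have Hh: "e1 \<oplus> e4 \<ominus> \<one> = \<zero>" using u0 unfolding u_def .
  have Rel: "e1 \<ominus> e1 \<otimes> e1 \<ominus> (s \<otimes> s) \<otimes> e2 \<otimes> e3 = \<zero>"
    by (rule c1[where k="\<ominus> \<one>" and h="e1 \<otimes> e1 \<oplus> (s \<otimes> s) \<otimes> e2 \<otimes> e3 \<ominus> e1"],
        (use cs in algebra), fact z1, (use cs in simp_all))
  have E'e: "\<one>\<^bsub>M2s R s\<^esub> \<ominus>\<^bsub>M2s R s\<^esub> E = (\<one> \<ominus> e1, \<zero> \<ominus> e2, \<zero> \<ominus> e3, \<one> \<ominus> e4)"
    unfolding Ee M2s_one by (rule T_minus) (use cs in \<open>simp_all add: M2s_simps\<close>)
  have E'c: "\<one>\<^bsub>M2s R s\<^esub> \<ominus>\<^bsub>M2s R s\<^esub> E \<in> carrier (M2s R s)" using E(1) by simp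
  have E'i: "(\<one>\<^bsub>M2s R s\<^esub> \<ominus>\<^bsub>M2s R s\<^esub> E) \<otimes>\<^bsub>M2s R s\<^esub> (\<one>\<^bsub>M2s R s\<^esub> \<ominus>\<^bsub>M2s R s\<^esub> E) = \<one>\<^bsub>M2s R s\<^esub> \<ominus>\<^bsub>M2s R s\<^esub> E"
    and E'comm: "A \<otimes>\<^bsub>M2s R s\<^esub> (\<one>\<^bsub>M2s R s\<^esub> \<ominus>\<^bsub>M2s R s\<^esub> E) = (\<one>\<^bsub>M2s R s\<^esub> \<ominus>\<^bsub>M2s R s\<^esub> E) \<otimes>\<^bsub>M2s R s\<^esub> A"
    and E'E: "(\<one>\<^bsub>M2s R s\<^esub> \<ominus>\<^bsub>M2s R s\<^esub> E) \<otimes>\<^bsub>M2s R s\<^esub> E = \<zero>\<^bsub>M2s R s\<^esub>"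
    using T.idem_compl[OF E(1) A E(2) E(3)] by auto
  have H': "(\<one> \<ominus> e1) \<oplus> (\<one> \<ominus> e4) \<ominus> \<one> = \<zero>"
    by (rule c1[where k="\<ominus> \<one>" and h="e1 \<oplus> e4 \<ominus> \<one>"],
        (use cs in algebra), fact Hh, (use cs in simp_all))
  have Rel': "(\<one> \<ominus> e1) \<ominus> (\<one> \<ominus> e1) \<otimes> (\<one> \<ominus> e1) \<ominus> (s \<otimes> s) \<otimes> (\<zero> \<ominus> e2) \<otimes> (\<zero> \<ominus> e3) = \<zero>"
    by (rule c1[where k="\<one>" and h="e1 \<ominus> e1 \<otimes> e1 \<ominus> (s \<otimes> s) \<otimes> e2 \<otimes> e3"],
        (use cs in algebra), fact Rel, (use cs in simp_all))
  define \<beta> where "\<beta> = e1 \<otimes> a \<oplus> (s \<otimes> s) \<otimes> e2 \<otimes> c \<oplus> ((s \<otimes> s) \<otimes> e3 \<otimes> b \<oplus> e4 \<otimes> d)"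
  define \<alpha> where "\<alpha> = (\<one> \<ominus> e1) \<otimes> a \<oplus> (s \<otimes> s) \<otimes> (\<zero> \<ominus> e2) \<otimes> c \<oplus> ((s \<otimes> s) \<otimes> (\<zero> \<ominus> e3) \<otimes> b \<oplus> (\<one> \<ominus> e4) \<otimes> d)"
  have \<alpha>c: "\<alpha> \<in> carrier R" unfolding \<alpha>_def using cs by simp
  have \<beta>c: "\<beta> \<in> carrier R" unfolding \<beta>_def using cs by simp
  note cs = cs \<alpha>c \<beta>c
  have EA: "E \<otimes>\<^bsub>M2s R s\<^esub> A = (\<beta> \<otimes> e1, \<beta> \<otimes> e2, \<beta> \<otimes> e3, \<beta> \<otimes> e4)"
  proof -
    have "E \<otimes>\<^bsub>M2s R s\<^esub> A = (E \<otimes>\<^bsub>M2s R s\<^esub> A) \<otimes>\<^bsub>M2s R s\<^esub> E" by (rule T.idem_comm[OF E(1) A E(2) E(3)])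
    also have "\<dots> = (\<beta> \<otimes> e1, \<beta> \<otimes> e2, \<beta> \<otimes> e3, \<beta> \<otimes> e4)"
      unfolding Ee Ae \<beta>_def by (rule EXE[OF _ _ _ _ _ _ _ _ Hh Rel]) (use cs in simp_all)
    finally show ?thesis .
  qed
  have E'A: "(\<one>\<^bsub>M2s R s\<^esub> \<ominus>\<^bsub>M2s R s\<^esub> E) \<otimes>\<^bsub>M2s R s\<^esub> A = (\<alpha> \<otimes> (\<one> \<ominus> e1), \<alpha> \<otimes> (\<zero> \<ominus> e2), \<alpha> \<otimes> (\<zero> \<ominus> e3), \<alpha> \<otimes> (\<one> \<ominus> e4))"
  proof -
    have "(\<one>\<^bsub>M2s R s\<^esub> \<ominus>\<^bsub>M2s R s\<^esub> E) \<otimes>\<^bsub>M2s R s\<^esub> A = ((\<one>\<^bsub>M2s R s\<^esub> \<ominus>\<^bsub>M2s R s\<^esub> E) \<otimes>\<^bsub>M2s R s\<^esub> A) \<otimes>\<^bsub>M2s R s\<^esub> (\<one>\<^bsub>M2s R s\<^esub> \<ominus>\<^bsub>M2s R s\<^esub> E)" by (rule T.idem_comm[OF E'c A E'i E'comm])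
    also have "\<dots> = (\<alpha> \<otimes> (\<one> \<ominus> e1), \<alpha> \<otimes> (\<zero> \<ominus> e2), \<alpha> \<otimes> (\<zero> \<ominus> e3), \<alpha> \<otimes> (\<one> \<ominus> e4))"
      unfolding E'e Ae \<alpha>_def by (rule EXE[OF _ _ _ _ _ _ _ _ H' Rel']) (use cs in simp_all)
    finally show ?thesis .
  qed
  have "A = E \<otimes>\<^bsub>M2s R s\<^esub> A \<oplus>\<^bsub>M2s R s\<^esub> (\<one>\<^bsub>M2s R s\<^esub> \<ominus>\<^bsub>M2s R s\<^esub> E) \<otimes>\<^bsub>M2s R s\<^esub> A" using A E(1) by algebra
  also have "\<dots> = (\<beta> \<otimes> e1 \<oplus> \<alpha> \<otimes> (\<one> \<ominus> e1), \<beta> \<otimes> e2 \<oplus> \<alpha> \<otimes> (\<zero> \<ominus> e2), \<beta> \<otimes> e3 \<oplus> \<alpha> \<otimes> (\<zero> \<ominus> e3), \<beta> \<otimes> e4 \<oplus> \<alpha> \<otimes> (\<one> \<ominus> e4))"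
    unfolding EA E'A M2s_add ..
  finally have "(a,b,c,d) = (\<beta> \<otimes> e1 \<oplus> \<alpha> \<otimes> (\<one> \<ominus> e1), \<beta> \<otimes> e2 \<oplus> \<alpha> \<otimes> (\<zero> \<ominus> e2), \<beta> \<otimes> e3 \<oplus> \<alpha> \<otimes> (\<zero> \<ominus> e3), \<beta> \<otimes> e4 \<oplus> \<alpha> \<otimes> (\<one> \<ominus> e4))"
    by (simp only: Ae)
  then have a_eq: "a = \<beta> \<otimes> e1 \<oplus> \<alpha> \<otimes> (\<one> \<ominus> e1)" and b_eq: "b = \<beta> \<otimes> e2 \<oplus> \<alpha> \<otimes> (\<zero> \<ominus> e2)"
    and c_eq: "c = \<beta> \<otimes> e3 \<oplus> \<alpha> \<otimes> (\<zero> \<ominus> e3)" and d_eq: "d = \<beta> \<otimes> e4 \<oplus> \<alpha> \<otimes> (\<one> \<ominus> e4)"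
    by (simp_all only: prod.inject)
  have e4e: "e4 = \<one> \<ominus> e1"
    by (rule c1[where k="\<one>" and h="e1 \<oplus> e4 \<ominus> \<one>"], (use cs in algebra), fact Hh, (use cs in simp_all))
  have q2: "(s \<otimes> s) \<otimes> e2 \<otimes> e3 = e1 \<ominus> e1 \<otimes> e1"
    by (rule c1[where k="\<ominus> \<one>" and h="e1 \<ominus> e1 \<otimes> e1 \<ominus> (s \<otimes> s) \<otimes> e2 \<otimes> e3"], (use cs in algebra), fact Rel, (use cs in simp_all))
  define f where "f = \<one> \<ominus> e1"
  have fc: "f \<in> carrier R" unfolding f_def using cs by simp
  have oo: "\<one> \<ominus> f = e1" unfolding f_def using cs by algebra
  have ef1: "e1 \<oplus> f = \<one>" unfolding f_def using cs by algebra
  have eff: "e1 \<ominus> e1 \<otimes> e1 = e1 \<otimes> f" unfolding f_def using cs by algebra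
  have a_f: "a = \<beta> \<otimes> e1 \<oplus> \<alpha> \<otimes> f" unfolding a_eq f_def ..
  have d_f: "d = \<beta> \<otimes> f \<oplus> \<alpha> \<otimes> e1"
  proof -
    have "d = \<beta> \<otimes> (\<one> \<ominus> e1) \<oplus> \<alpha> \<otimes> (\<one> \<ominus> (\<one> \<ominus> e1))" by (simp only: d_eq e4e)
    also have "\<dots> = \<beta> \<otimes> f \<oplus> \<alpha> \<otimes> e1" by (simp only: f_def[symmetric] oo)
    finally show ?thesis .
  qed
  have b_f: "b = (\<beta> \<ominus> \<alpha>) \<otimes> e2"
  proof -
    have "b = \<beta> \<otimes> e2 \<oplus> \<alpha> \<otimes> (\<zero> \<ominus> e2)" by (rule b_eq)
    also have "\<dots> = (\<beta> \<ominus> \<alpha>) \<otimes> e2" using cs by algebra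
    finally show ?thesis .
  qed
  have c_f: "c = (\<beta> \<ominus> \<alpha>) \<otimes> e3"
  proof -
    have "c = \<beta> \<otimes> e3 \<oplus> \<alpha> \<otimes> (\<zero> \<ominus> e3)" by (rule c_eq)
    also have "\<dots> = (\<beta> \<ominus> \<alpha>) \<otimes> e3" using cs by algebra
    finally show ?thesis .
  qed
  have tr: "a \<oplus> d = \<alpha> \<oplus> \<beta>"
  proof -
    have "a \<oplus> d = (\<beta> \<otimes> e1 \<oplus> \<alpha> \<otimes> f) \<oplus> (\<beta> \<otimes> f \<oplus> \<alpha> \<otimes> e1)" by (simp only: a_f d_f)
    also have "\<dots> = (\<alpha> \<oplus> \<beta>) \<otimes> (e1 \<oplus> f)" using cs fc by algebra
    also have "\<dots> = \<alpha> \<oplus> \<beta>" using cs by (simp add: ef1)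
    finally show ?thesis .
  qed
  have bc: "(s \<otimes> s) \<otimes> b \<otimes> c = (\<beta> \<ominus> \<alpha>) \<otimes> (\<beta> \<ominus> \<alpha>) \<otimes> (e1 \<otimes> f)"
  proof -
    have "(s \<otimes> s) \<otimes> b \<otimes> c = (s \<otimes> s) \<otimes> ((\<beta> \<ominus> \<alpha>) \<otimes> e2) \<otimes> ((\<beta> \<ominus> \<alpha>) \<otimes> e3)" by (simp only: b_f c_f)
    also have "\<dots> = (\<beta> \<ominus> \<alpha>) \<otimes> (\<beta> \<ominus> \<alpha>) \<otimes> ((s \<otimes> s) \<otimes> e2 \<otimes> e3)" using cs by algebra
    also have "\<dots> = (\<beta> \<ominus> \<alpha>) \<otimes> (\<beta> \<ominus> \<alpha>) \<otimes> (e1 \<otimes> f)" by (simp only: q2 eff)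
    finally show ?thesis .
  qed
  have dt: "a \<otimes> d \<ominus> (s \<otimes> s) \<otimes> b \<otimes> c = \<alpha> \<otimes> \<beta>"
  proof -
    have "a \<otimes> d \<ominus> (s \<otimes> s) \<otimes> b \<otimes> c = (\<beta> \<otimes> e1 \<oplus> \<alpha> \<otimes> f) \<otimes> (\<beta> \<otimes> f \<oplus> \<alpha> \<otimes> e1) \<ominus> (\<beta> \<ominus> \<alpha>) \<otimes> (\<beta> \<ominus> \<alpha>) \<otimes> (e1 \<otimes> f)"
      by (simp only: bc, simp only: a_f d_f)
    also have "\<dots> = \<alpha> \<otimes> \<beta> \<otimes> ((e1 \<oplus> f) \<otimes> (e1 \<oplus> f))" using cs fc by algebra
    also have "\<dots> = \<alpha> \<otimes> \<beta>" using cs by (simp add: ef1)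
    finally show ?thesis .
  qed
  have ch\<alpha>: "\<alpha> \<otimes> \<alpha> \<ominus> (a \<oplus> d) \<otimes> \<alpha> \<oplus> (a \<otimes> d \<ominus> (s \<otimes> s) \<otimes> b \<otimes> c) = \<zero>"
    unfolding tr dt using cs by algebra
  have ch\<beta>: "\<beta> \<otimes> \<beta> \<ominus> (a \<oplus> d) \<otimes> \<beta> \<oplus> (a \<otimes> d \<ominus> (s \<otimes> s) \<otimes> b \<otimes> c) = \<zero>"
    unfolding tr dt using cs by algebra
  have EAE: "E \<otimes>\<^bsub>M2s R s\<^esub> (A \<ominus>\<^bsub>M2s R s\<^esub> E) = ((\<beta> \<ominus> \<one>) \<otimes> e1, (\<beta> \<ominus> \<one>) \<otimes> e2, (\<beta> \<ominus> \<one>) \<otimes> e3, (\<beta> \<ominus> \<one>) \<otimes> e4)"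
  proof -
    have "E \<otimes>\<^bsub>M2s R s\<^esub> (A \<ominus>\<^bsub>M2s R s\<^esub> E) = E \<otimes>\<^bsub>M2s R s\<^esub> A \<ominus>\<^bsub>M2s R s\<^esub> E \<otimes>\<^bsub>M2s R s\<^esub> E" using A E(1) by algebra
    also have "\<dots> = E \<otimes>\<^bsub>M2s R s\<^esub> A \<ominus>\<^bsub>M2s R s\<^esub> E" using E(2) by simp
    also have "\<dots> = (\<beta> \<otimes> e1 \<ominus> e1, \<beta> \<otimes> e2 \<ominus> e2, \<beta> \<otimes> e3 \<ominus> e3, \<beta> \<otimes> e4 \<ominus> e4)"
      unfolding EA unfolding Ee by (rule T_minus) (use cs in \<open>simp_all add: M2s_simps\<close>)
    also have "\<dots> = ((\<beta> \<ominus> \<one>) \<otimes> e1, (\<beta> \<ominus> \<one>) \<otimes> e2, (\<beta> \<ominus> \<one>) \<otimes> e3, (\<beta> \<ominus> \<one>) \<otimes> e4)"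
      unfolding prod.inject by (intro conjI; (use cs in algebra))
    finally show ?thesis .
  qed
  have jEAE: "E \<otimes>\<^bsub>M2s R s\<^esub> (A \<ominus>\<^bsub>M2s R s\<^esub> E) \<in> jacobson (M2s R s)" by (rule T.jac_lmult[OF E(1) E(4)])
  have bP: "\<beta> \<ominus> \<one> \<in> P"
  proof (rule ccontr)
    assume "\<beta> \<ominus> \<one> \<notin> P"
    then have bU: "\<beta> \<ominus> \<one> \<in> Units R" using nonP_unit \<beta>c by simp
    have "(e1,e2,e3,e4) \<in> jacobson (M2s R s)"
      by (rule scal_jac[OF bU]) (use E(1) Ee jEAE EAE in simp_all)
    then have "E = \<zero>\<^bsub>M2s R s\<^esub>" using T.jac_idem_zero[OF E(1) E(2)] Ee by simp
    with nz show False by simp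
  qed
  have E'AE: "(\<one>\<^bsub>M2s R s\<^esub> \<ominus>\<^bsub>M2s R s\<^esub> E) \<otimes>\<^bsub>M2s R s\<^esub> (A \<ominus>\<^bsub>M2s R s\<^esub> E) = (\<alpha> \<otimes> (\<one> \<ominus> e1), \<alpha> \<otimes> (\<zero> \<ominus> e2), \<alpha> \<otimes> (\<zero> \<ominus> e3), \<alpha> \<otimes> (\<one> \<ominus> e4))"
  proof -
    have "(\<one>\<^bsub>M2s R s\<^esub> \<ominus>\<^bsub>M2s R s\<^esub> E) \<otimes>\<^bsub>M2s R s\<^esub> (A \<ominus>\<^bsub>M2s R s\<^esub> E) = (\<one>\<^bsub>M2s R s\<^esub> \<ominus>\<^bsub>M2s R s\<^esub> E) \<otimes>\<^bsub>M2s R s\<^esub> A \<ominus>\<^bsub>M2s R s\<^esub> (\<one>\<^bsub>M2s R s\<^esub> \<ominus>\<^bsub>M2s R s\<^esub> E) \<otimes>\<^bsub>M2s R s\<^esub> E" using A E(1) by algebra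
    also have "\<dots> = (\<one>\<^bsub>M2s R s\<^esub> \<ominus>\<^bsub>M2s R s\<^esub> E) \<otimes>\<^bsub>M2s R s\<^esub> A" using E'E E'c A by (simp add: T.minus_eq)
    finally show ?thesis using E'A by simp
  qed
  have jE'AE: "(\<one>\<^bsub>M2s R s\<^esub> \<ominus>\<^bsub>M2s R s\<^esub> E) \<otimes>\<^bsub>M2s R s\<^esub> (A \<ominus>\<^bsub>M2s R s\<^esub> E) \<in> jacobson (M2s R s)" by (rule T.jac_lmult[OF E'c E(4)])
  have aP: "\<alpha> \<in> P"
  proof (rule ccontr)
    assume "\<alpha> \<notin> P"
    then have aU: "\<alpha> \<in> Units R" using nonP_unit \<alpha>c by simp
    have "(\<one> \<ominus> e1, \<zero> \<ominus> e2, \<zero> \<ominus> e3, \<one> \<ominus> e4) \<in> jacobson (M2s R s)"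
      by (rule scal_jac[OF aU]) (use E'c E'e jE'AE E'AE in simp_all)
    then have "\<one>\<^bsub>M2s R s\<^esub> \<ominus>\<^bsub>M2s R s\<^esub> E = \<zero>\<^bsub>M2s R s\<^esub>" using T.jac_idem_zero[OF E'c E'i] E'e by simp
    then have "E = \<one>\<^bsub>M2s R s\<^esub>" using E(1) T.r_right_minus_eq[of "\<one>\<^bsub>M2s R s\<^esub>" E] by simp
    with n1 show False by simp
  qed
  show ?thesis using aP bP \<beta>c ch\<alpha> ch\<beta> by blast
qed

theorem main:
  assumes A: "A \<in> carrier (M2s R s)"
  shows "strongly_J_clean (M2s R s) A \<longleftrightarrow>
     (A \<in> jacobson (M2s R s)
      \<or> \<one>\<^bsub>M2s R s\<^esub> \<ominus>\<^bsub>M2s R s\<^esub> A \<in> jacobson (M2s R s)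
      \<or> ((\<exists>t\<in>jacobson R. char_s R s A t = \<zero>\<^bsub>R\<^esub>) \<and>
         (\<exists>j\<in>jacobson R. char_s R s A (\<one>\<^bsub>R\<^esub> \<oplus>\<^bsub>R\<^esub> j) = \<zero>\<^bsub>R\<^esub>)))"
proof -
  obtain a b c d where Ae: "A = (a,b,c,d)" by (cases A)
  have ac: "a \<in> carrier R" "b \<in> carrier R" "c \<in> carrier R" "d \<in> carrier R"
    using A Ae by (simp_all add: M2s_simps)
  have chi: "char_s R s A t = t \<otimes> t \<ominus> (a \<oplus> d) \<otimes> t \<oplus> (a \<otimes> d \<ominus> (s \<otimes> s) \<otimes> b \<otimes> c)" for t
    by (simp only: char_s_def tr2_def det_s_def Ae prod.case)
  show ?thesis
  proof
    assume "strongly_J_clean (M2s R s) A"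
    then obtain E where E: "E \<in> carrier (M2s R s)" "E \<otimes>\<^bsub>M2s R s\<^esub> E = E" "A \<otimes>\<^bsub>M2s R s\<^esub> E = E \<otimes>\<^bsub>M2s R s\<^esub> A" "A \<ominus>\<^bsub>M2s R s\<^esub> E \<in> jacobson (M2s R s)"
      unfolding strongly_J_clean_def by blast
    show "A \<in> jacobson (M2s R s)
      \<or> \<one>\<^bsub>M2s R s\<^esub> \<ominus>\<^bsub>M2s R s\<^esub> A \<in> jacobson (M2s R s)
      \<or> ((\<exists>t\<in>jacobson R. char_s R s A t = \<zero>\<^bsub>R\<^esub>) \<and>
         (\<exists>j\<in>jacobson R. char_s R s A (\<one>\<^bsub>R\<^esub> \<oplus>\<^bsub>R\<^esub> j) = \<zero>\<^bsub>R\<^esub>))"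
    proof (cases "E = \<zero>\<^bsub>M2s R s\<^esub>")
      case True
      then have "A \<in> jacobson (M2s R s)" using E(4) A by (simp add: T.minus_eq)
      then show ?thesis by blast
    next
      case nz: False
      show ?thesis
      proof (cases "E = \<one>\<^bsub>M2s R s\<^esub>")
        case True
        have "\<one>\<^bsub>M2s R s\<^esub> \<ominus>\<^bsub>M2s R s\<^esub> A = \<ominus>\<^bsub>M2s R s\<^esub> (A \<ominus>\<^bsub>M2s R s\<^esub> \<one>\<^bsub>M2s R s\<^esub>)" using A by algebra
        moreover have "\<ominus>\<^bsub>M2s R s\<^esub> (A \<ominus>\<^bsub>M2s R s\<^esub> \<one>\<^bsub>M2s R s\<^esub>) \<in> jacobson (M2s R s)" using T.jac_neg E(4) True by simp
        ultimately show ?thesis by simp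
      next
        case n1: False
        obtain \<alpha> \<beta> where ab: "\<alpha> \<in> P" "\<beta> \<ominus> \<one> \<in> P" "\<beta> \<in> carrier R"
          "\<alpha> \<otimes> \<alpha> \<ominus> (a \<oplus> d) \<otimes> \<alpha> \<oplus> (a \<otimes> d \<ominus> (s \<otimes> s) \<otimes> b \<otimes> c) = \<zero>"
          "\<beta> \<otimes> \<beta> \<ominus> (a \<oplus> d) \<otimes> \<beta> \<oplus> (a \<otimes> d \<ominus> (s \<otimes> s) \<otimes> b \<otimes> c) = \<zero>"
          using fwd[OF A Ae ac E nz n1] by blast
        have "\<exists>t\<in>jacobson R. char_s R s A t = \<zero>"
        proof (rule bexI[of _ \<alpha>])
          show "char_s R s A \<alpha> = \<zero>" unfolding chi by (rule ab(4))
          show "\<alpha> \<in> jacobson R" using ab(1) jac_R by simp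
        qed
        moreover have "\<one> \<oplus> (\<beta> \<ominus> \<one>) = \<beta>" using ab(3) by algebra
        then have "char_s R s A (\<one> \<oplus> (\<beta> \<ominus> \<one>)) = \<zero>" using ab(5) chi by simp
        then have "\<exists>j\<in>jacobson R. char_s R s A (\<one> \<oplus> j) = \<zero>"
          by (intro bexI[of _ "\<beta> \<ominus> \<one>"]) (use ab(2) jac_R in simp_all)
        ultimately show ?thesis by blast
      qed
    qed
  next
    assume H: "A \<in> jacobson (M2s R s)
      \<or> \<one>\<^bsub>M2s R s\<^esub> \<ominus>\<^bsub>M2s R s\<^esub> A \<in> jacobson (M2s R s)
      \<or> ((\<exists>t\<in>jacobson R. char_s R s A t = \<zero>\<^bsub>R\<^esub>) \<and>
         (\<exists>j\<in>jacobson R. char_s R s A (\<one>\<^bsub>R\<^esub> \<oplus>\<^bsub>R\<^esub> j) = \<zero>\<^bsub>R\<^esub>))"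
    show "strongly_J_clean (M2s R s) A"
    proof (cases "A \<in> jacobson (M2s R s)")
      case True
      have "A \<ominus>\<^bsub>M2s R s\<^esub> \<zero>\<^bsub>M2s R s\<^esub> = A" using A by (simp add: T.minus_eq)
      then show ?thesis unfolding strongly_J_clean_def using A True
        by (intro conjI bexI[of _ "\<zero>\<^bsub>M2s R s\<^esub>"]) simp_all
    next
      case nJ: False
      show ?thesis
      proof (cases "\<one>\<^bsub>M2s R s\<^esub> \<ominus>\<^bsub>M2s R s\<^esub> A \<in> jacobson (M2s R s)")
        case True
        have "A \<ominus>\<^bsub>M2s R s\<^esub> \<one>\<^bsub>M2s R s\<^esub> = \<ominus>\<^bsub>M2s R s\<^esub> (\<one>\<^bsub>M2s R s\<^esub> \<ominus>\<^bsub>M2s R s\<^esub> A)" using A by algebra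
        then have "A \<ominus>\<^bsub>M2s R s\<^esub> \<one>\<^bsub>M2s R s\<^esub> \<in> jacobson (M2s R s)" using T.jac_neg[OF True] by simp
        then show ?thesis unfolding strongly_J_clean_def using A
          by (intro conjI bexI[of _ "\<one>\<^bsub>M2s R s\<^esub>"]) simp_all
      next
        case False
        then obtain t j where tj: "t \<in> jacobson R" "char_s R s A t = \<zero>"
          "j \<in> jacobson R" "char_s R s A (\<one> \<oplus> j) = \<zero>" using H nJ by blast
        show ?thesis
          by (rule bwd[OF A Ae ac]) (use tj chi jac_R in simp_all)
      qed
    qed
  qed
qed

end

theorem theorem3p6:
  fixes R :: "('a, 'b) ring_scheme" and s :: 'a and A :: "'a \<times> 'a \<times> 'a \<times> 'a"
  assumes "local_ring R" and "s \<in> carrier R" and "A \<in> carrier (M2s R s)"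
  shows "strongly_J_clean (M2s R s) A \<longleftrightarrow>
     (A \<in> jacobson (M2s R s)
      \<or> \<one>\<^bsub>M2s R s\<^esub> \<ominus>\<^bsub>M2s R s\<^esub> A \<in> jacobson (M2s R s)
      \<or> ((\<exists>t\<in>jacobson R. char_s R s A t = \<zero>\<^bsub>R\<^esub>) \<and>
         (\<exists>j\<in>jacobson R. char_s R s A (\<one>\<^bsub>R\<^esub> \<oplus>\<^bsub>R\<^esub> j) = \<zero>\<^bsub>R\<^esub>)))"
proof -
  have cr: "cring R" using assms(1) unfolding local_ring_def by blast
  interpret lrs R s
    by (intro lrs.intro lr.intro lr_axioms.intro lrs_axioms.intro cr assms(1) assms(2))
  show ?thesis by (rule main[OF assms(3)])
qed


end
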